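(* Let $\mathcal{M}(\mathcal{G})$ be the Bayesian Network represented by DAG $\mathcal{G}$ with vertex set $\mathbf{V}$. Assume $Y$ and $A$ are single disjoint vertices and $\mathrm{irrel}(A,Y,\mathcal{G})=\emptyset$. Then 1. If $J\geq1$ then for all $j\in\{1,\dots,J\}$, $E_P[J_{P,a,\mathcal{G}}\mid W_j,\mathrm{pa}_{\mathcal{G}}(W_j)]=E_P[b_a(\mathbf{O};P)\mid W_j,\mathrm{pa}_{\mathcal{G}}(W_j)]$. 2. If $K\geq1$ then for all $k\in\{1,\dots,K\}$, $E_P[J_{P,a,\mathcal{G}}\mid M_k,\mathrm{pa}_{\mathcal{G}}(M_k)]=E_P[T_{P,a,\mathcal{G}}\mid M_k,\mathrm{pa}_{\mathcal{G}}(M_k)]$. 3. $E_P[J_{P,a,\mathcal{G}}\mid Y,\mathrm{pa}_{\mathcal{G}}(Y)]=E_P[T_{P,a,\mathcal{G}}\mid Y,\mathrm{pa}_{\mathcal{G}}(Y)]$.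
   Context: $\mathcal{M}(\mathcal{G})$ is the set of laws satisfying the local Markov property w.r.t. $\mathcal{G}$; equalities hold for all $P\in\mathcal{M}(\mathcal{G})$. $\mathrm{pa}_{\mathcal{G}}$, $\mathrm{an}_{\mathcal{G}}$, $\mathrm{de}_{\mathcal{G}}$ denote parents, ancestors, descendants. $\mathrm{indir}(A,Y,\mathcal{G})=\{V\in\mathrm{an}_{\mathcal{G}}(A)\setminus\{A\}:\text{all causal paths from }V\text{ to }Y\text{ intersect }A\}$, $\mathrm{irrel}(A,Y,\mathcal{G})=\mathrm{indir}(A,Y,\mathcal{G})\cup\mathrm{an}_{\mathcal{G}}(Y)^c$. When $\mathrm{irrel}(A,Y,\mathcal{G})=\emptyset$, $\mathbf{V}$ is partitioned into $\mathbf{W}$ (non-descendants of $A$), $A$, $\mathbf{M}$ (mediators: vertices on causal paths between $A$ and $Y$ other than $A,Y$) and $Y$, topologically sorted as $(W_1,\dots,W_J,A,M_1,\dots,M_K,Y)$ ($J=0$ or $K=0$ if the set is empty). $\mathrm{cn}(A,Y,\mathcal{G})$ is the set of nodes on causal paths from $A$ to $Y$ other than $A$ and $\mathbf{O}=\mathbf{O}(A,Y,\mathcal{G})=\mathrm{pa}_{\mathcal{G}}(\mathrm{cn}(A,Y,\mathcal{G}))\setminus[\mathrm{de}_{\mathcal{G}}(\mathrm{cn}(A,Y,\mathcal{G}))\cup\{A\}]$. $A$ is discrete; $\pi_a(\mathbf{Z};P)=P(A=a\mid\mathbf{Z})$, $b_a(\mathbf{O};P)=E_P[Y\mid A=a,\mathbf{O}]$,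 $J_{P,a,\mathcal{G}}=\frac{I_a(A)Y}{P(A=a\mid\mathrm{pa}_{\mathcal{G}}(A))}$, $T_{P,a,\mathcal{G}}=\frac{I_a(A)Y}{\pi_a(\mathbf{O};P)}$. *)

theory Defs
  imports "HOL-Probability.Probability"
begin

text \<open>A DAG on a finite vertex set V with edge relation E (an edge (u,v) means u -> v).
  Ancestors and descendants include the vertex itself.\<close>

definition is_DAG :: "'v set \<Rightarrow> ('v \<times> 'v) set \<Rightarrow> bool" where
  "is_DAG V E \<longleftrightarrow> finite V \<and> E \<subseteq> V \<times> V \<and> acyclic E"

definition pa :: "('v \<times> 'v) set \<Rightarrow> 'v \<Rightarrow> 'v set" where
  "pa E v = {u. (u, v) \<in> E}"

definition pa_set :: "('v \<times> 'v) set \<Rightarrow> 'v set \<Rightarrow> 'v set" where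
  "pa_set E S = (\<Union>v\<in>S. pa E v)"

definition an :: "'v set \<Rightarrow> ('v \<times> 'v) set \<Rightarrow> 'v \<Rightarrow> 'v set" where
  "an V E v = {u \<in> V. (u, v) \<in> E\<^sup>*}"

definition de :: "'v set \<Rightarrow> ('v \<times> 'v) set \<Rightarrow> 'v \<Rightarrow> 'v set" where
  "de V E v = {u \<in> V. (v, u) \<in> E\<^sup>*}"

definition de_set :: "'v set \<Rightarrow> ('v \<times> 'v) set \<Rightarrow> 'v set \<Rightarrow> 'v set" where
  "de_set V E S = (\<Union>v\<in>S. de V E v)"

definition reach_avoiding :: "'v set \<Rightarrow> ('v \<times> 'v) set \<Rightarrow> 'v \<Rightarrow> 'v \<Rightarrow> 'v \<Rightarrow> bool" where
  "reach_avoiding V E A u w \<longleftrightarrow> (u, w) \<in> (Restr E (V - {A}))\<^sup>* \<and> u \<in> V - {A} \<and> w \<in> V - {A}"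

text \<open>indir(A,Y,G): ancestors V of A (other than A) such that every causal path from V to Y
  intersects A, i.e. there is no causal path from V to Y avoiding A.\<close>
definition indir :: "'v set \<Rightarrow> ('v \<times> 'v) set \<Rightarrow> 'v \<Rightarrow> 'v \<Rightarrow> 'v set" where
  "indir V E A Y = {u \<in> an V E A - {A}. \<not> reach_avoiding V E A u Y}"

definition irrel :: "'v set \<Rightarrow> ('v \<times> 'v) set \<Rightarrow> 'v \<Rightarrow> 'v \<Rightarrow> 'v set" where
  "irrel V E A Y = indir V E A Y \<union> (V - an V E Y)"

definition cn :: "'v set \<Rightarrow> ('v \<times> 'v) set \<Rightarrow> 'v \<Rightarrow> 'v \<Rightarrow> 'v set" where
  "cn V E A Y = {v \<in> V. v \<noteq> A \<and> (A, v) \<in> E\<^sup>* \<and> (v, Y) \<in> E\<^sup>*}"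

definition mediators :: "'v set \<Rightarrow> ('v \<times> 'v) set \<Rightarrow> 'v \<Rightarrow> 'v \<Rightarrow> 'v set" where
  "mediators V E A Y = cn V E A Y - {Y}"

definition nondesc :: "'v set \<Rightarrow> ('v \<times> 'v) set \<Rightarrow> 'v \<Rightarrow> 'v set" where
  "nondesc V E A = V - de V E A"

definition Oset :: "'v set \<Rightarrow> ('v \<times> 'v) set \<Rightarrow> 'v \<Rightarrow> 'v \<Rightarrow> 'v set" where
  "Oset V E A Y = pa_set E (cn V E A Y) - (de_set V E (cn V E A Y) \<union> {A})"

text \<open>sigma-algebra generated by the variables X v, v in S (trivial sigma-algebra if S is empty).\<close>
definition gen :: "'a measure \<Rightarrow> ('v \<Rightarrow> 'b measure) \<Rightarrow> ('v \<Rightarrow> 'a \<Rightarrow> 'b) \<Rightarrow> 'v set \<Rightarrow> 'a measure" where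
  "gen M N X S = sigma (space M) (\<Union>v\<in>S. {X v -` B \<inter> space M | B. B \<in> sets (N v)})"

definition cond_indep :: "'a measure \<Rightarrow> 'a measure \<Rightarrow> 'a measure \<Rightarrow> 'a measure \<Rightarrow> bool" where
  "cond_indep M F G H \<longleftrightarrow>
     (\<forall>A\<in>sets F. \<forall>B\<in>sets G. AE \<omega> in M.
        real_cond_exp M H (\<lambda>x. indicator A x * indicator B x) \<omega>
          = real_cond_exp M H (indicator A) \<omega> * real_cond_exp M H (indicator B) \<omega>)"

text \<open>P belongs to M(G): local Markov property: each X v is conditionally independent of its
  non-descendants (other than its parents) given its parents.\<close>
definition local_markov ::
  "'a measure \<Rightarrow> ('v \<Rightarrow> 'b measure) \<Rightarrow> ('v \<Rightarrow> 'a \<Rightarrow> 'b) \<Rightarrow> 'v set \<Rightarrow> ('v \<times> 'v) set \<Rightarrow> bool" where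
  "local_markov M N X V E \<longleftrightarrow>
     (\<forall>v\<in>V. cond_indep M (gen M N X {v}) (gen M N X (V - de V E v - pa E v)) (gen M N X (pa E v)))"

definition Ind :: "('v \<Rightarrow> 'a \<Rightarrow> 'b) \<Rightarrow> 'v \<Rightarrow> 'b \<Rightarrow> 'a \<Rightarrow> real" where
  "Ind X A a \<omega> = (if X A \<omega> = a then 1 else 0)"

definition prop_score ::
  "'a measure \<Rightarrow> ('v \<Rightarrow> 'b measure) \<Rightarrow> ('v \<Rightarrow> 'a \<Rightarrow> 'b) \<Rightarrow> 'v \<Rightarrow> 'b \<Rightarrow> 'v set \<Rightarrow> 'a \<Rightarrow> real" where
  "prop_score M N X A a Z = real_cond_exp M (gen M N X Z) (Ind X A a)"

text \<open>b_a(O;P) = E[Y | A = a, O] = E[I_a(A) Y | O] / P(A = a | O); Y is the real variable y(X Y).\<close>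
definition breg ::
  "'a measure \<Rightarrow> ('v \<Rightarrow> 'b measure) \<Rightarrow> ('v \<Rightarrow> 'a \<Rightarrow> 'b) \<Rightarrow> 'v \<Rightarrow> 'b \<Rightarrow> 'v \<Rightarrow> ('b \<Rightarrow> real) \<Rightarrow> 'v set \<Rightarrow> 'a \<Rightarrow> real" where
  "breg M N X A a Y y Os \<omega> =
     real_cond_exp M (gen M N X Os) (\<lambda>x. Ind X A a x * y (X Y x)) \<omega> / prop_score M N X A a Os \<omega>"

definition Jest ::
  "'a measure \<Rightarrow> ('v \<Rightarrow> 'b measure) \<Rightarrow> ('v \<Rightarrow> 'a \<Rightarrow> 'b) \<Rightarrow> ('v \<times> 'v) set \<Rightarrow> 'v \<Rightarrow> 'b \<Rightarrow> 'v \<Rightarrow> ('b \<Rightarrow> real) \<Rightarrow> 'a \<Rightarrow> real" where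
  "Jest M N X E A a Y y \<omega> = Ind X A a \<omega> * y (X Y \<omega>) / prop_score M N X A a (pa E A) \<omega>"

definition Test ::
  "'a measure \<Rightarrow> ('v \<Rightarrow> 'b measure) \<Rightarrow> ('v \<Rightarrow> 'a \<Rightarrow> 'b) \<Rightarrow> 'v set \<Rightarrow> ('v \<times> 'v) set \<Rightarrow> 'v \<Rightarrow> 'b \<Rightarrow> 'v \<Rightarrow> ('b \<Rightarrow> real) \<Rightarrow> 'a \<Rightarrow> real" where
  "Test M N X V E A a Y y \<omega> = Ind X A a \<omega> * y (X Y \<omega>) / prop_score M N X A a (Oset V E A Y) \<omega>"

end

theory Submission
  imports Defs
begin

locale gsetup = prob_space M for M :: "'a measure" +
  fixes N :: "'v \<Rightarrow> 'b measure" and X :: "'v \<Rightarrow> 'a \<Rightarrow> 'b" and V :: "'v set"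
  assumes Xmeas: "\<And>v. v \<in> V \<Longrightarrow> X v \<in> measurable M (N v)"
begin

abbreviation G :: "'v set \<Rightarrow> 'a measure" where "G S \<equiv> gen M N X S"

definition gens :: "'v set \<Rightarrow> 'a set set" where
  "gens S = (\<Union>v\<in>S. {X v -` B \<inter> space M | B. B \<in> sets (N v)})"

lemma gens_Pow: "gens S \<subseteq> Pow (space M)"
  unfolding gens_def by auto

lemma space_G[simp]: "space (G S) = space M"
  unfolding gen_def by (rule space_measure_of) (auto)

lemma sets_G: "sets (G S) = sigma_sets (space M) (gens S)"
  unfolding gen_def gens_def by (rule sets_measure_of) auto

lemma gens_sub: "S \<subseteq> V \<Longrightarrow> gens S \<subseteq> sets M"
  unfolding gens_def using Xmeas by (auto intro!: measurable_sets)

lemma G_sub: "S \<subseteq> V \<Longrightarrow> sets (G S) \<subseteq> sets M"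
  unfolding sets_G by (rule sets.sigma_sets_subset) (rule gens_sub)

lemma subalg: "S \<subseteq> V \<Longrightarrow> subalgebra M (G S)"
  unfolding subalgebra_def using G_sub by auto

lemma sfs: "S \<subseteq> V \<Longrightarrow> sigma_finite_subalgebra M (G S)"
  by (rule finite_measure_subalgebra_is_sigma_finite)
     (simp add: finite_measure_subalgebra_def finite_measure_subalgebra_axioms_def subalg finite_measure_axioms)

lemma G_mono: "S \<subseteq> T \<Longrightarrow> sets (G S) \<subseteq> sets (G T)"
  unfolding sets_G gens_def by (rule sigma_sets_mono') auto

lemma subalg2: "S \<subseteq> T \<Longrightarrow> subalgebra (G T) (G S)"
  unfolding subalgebra_def using G_mono by auto

lemma meas_lift: "f \<in> borel_measurable (G S) \<Longrightarrow> S \<subseteq> T \<Longrightarrow> f \<in> borel_measurable (G T)"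
  using measurable_from_subalg[OF subalg2] by blast

lemma meas_M: "f \<in> borel_measurable (G S) \<Longrightarrow> S \<subseteq> V \<Longrightarrow> f \<in> borel_measurable M"
  using measurable_from_subalg[OF subalg] by blast

lemma sets_lift: "B \<in> sets (G S) \<Longrightarrow> S \<subseteq> T \<Longrightarrow> B \<in> sets (G T)"
  using G_mono by blast

lemma sets_M: "B \<in> sets (G S) \<Longrightarrow> S \<subseteq> V \<Longrightarrow> B \<in> sets M"
  using G_sub by blast

lemma X_meas_G:
  assumes vS: "v \<in> S" and vV: "v \<in> V"
  shows "X v \<in> measurable (G S) (N v)"
proof (rule measurableI)
  fix x assume "x \<in> space (G S)"
  then have "x \<in> space M" by simp
  then show "X v x \<in> space (N v)" using measurable_space[OF Xmeas[OF vV]] by blast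
next
  fix B assume "B \<in> sets (N v)"
  then have "X v -` B \<inter> space M \<in> gens S" unfolding gens_def using vS by auto
  then show "X v -` B \<inter> space (G S) \<in> sets (G S)" unfolding sets_G space_G by (rule sigma_sets.Basic)
qed

lemma sets_G_single:
  assumes v: "v \<in> V"
  shows "sets (G {v}) = {X v -` B \<inter> space M | B. B \<in> sets (N v)}"
proof -
  have fX: "X v \<in> space M \<rightarrow> space (N v)" using measurable_space[OF Xmeas[OF v]] by blast
  have g: "gens {v} = {X v -` B \<inter> space M | B. B \<in> sets (N v)}" unfolding gens_def by blast
  have "sets (G {v}) = sigma_sets (space M) {X v -` B \<inter> space M | B. B \<in> sets (N v)}"
    unfolding sets_G g ..
  also have "\<dots> = sets (vimage_algebra (space M) (X v) (N v))"
    unfolding sets_vimage_algebra ..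
  also have "\<dots> = {X v -` B \<inter> space M | B. B \<in> sets (N v)}"
    by (rule sets_vimage_algebra2[OF fX])
  finally show ?thesis .
qed

definition prodsets :: "'v set \<Rightarrow> 'v set \<Rightarrow> 'a set set" where
  "prodsets S T = {B \<inter> C | B C. B \<in> sets (G S) \<and> C \<in> sets (G T)}"

lemma prodsets_Int_stable: "Int_stable (prodsets S T)"
  unfolding Int_stable_def prodsets_def
proof safe
  fix B C B' C' assume "B \<in> sets (G S)" "C \<in> sets (G T)" "B' \<in> sets (G S)" "C' \<in> sets (G T)"
  then show "\<exists>B'' C''. B \<inter> C \<inter> (B' \<inter> C') = B'' \<inter> C'' \<and> B'' \<in> sets (G S) \<and> C'' \<in> sets (G T)"
    by (intro exI[of _ "B \<inter> B'"] exI[of _ "C \<inter> C'"]) (auto simp: sets.Int)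
qed

lemma prodsets_Pow: "prodsets S T \<subseteq> Pow (space M)"
  unfolding prodsets_def using sets.sets_into_space[of _ "G S"] by fastforce

lemma space_prodsets: "space M \<in> prodsets S T"
  unfolding prodsets_def by (auto intro!: exI[of _ "space M"] sets.top[of "G S", simplified] sets.top[of "G T", simplified])

lemma sets_G_Un: "sets (G (S \<union> T)) = sigma_sets (space M) (prodsets S T)"
proof -
  have "sigma_sets (space M) (gens (S \<union> T)) = sigma_sets (space M) (prodsets S T)"
  proof (rule sigma_sets_eqI)
    fix a assume a: "a \<in> gens (S \<union> T)"
    show "a \<in> sigma_sets (space M) (prodsets S T)"
    proof (rule sigma_sets.Basic)
      from a obtain v B where v: "v \<in> S \<union> T" "B \<in> sets (N v)" "a = X v -` B \<inter> space M"
        unfolding gens_def by auto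
      show "a \<in> prodsets S T"
      proof (cases "v \<in> S")
        case True
        then have "a \<in> sets (G S)" unfolding sets_G gens_def using v by auto
        moreover have "space M \<in> sets (G T)" using sets.top[of "G T"] by simp
        ultimately show ?thesis unfolding prodsets_def
          using sets.sets_into_space[of a "G S"] by (intro CollectI exI[of _ a] exI[of _ "space M"]) auto
      next
        case False
        then have "a \<in> sets (G T)" unfolding sets_G gens_def using v by auto
        moreover have "space M \<in> sets (G S)" using sets.top[of "G S"] by simp
        ultimately show ?thesis unfolding prodsets_def
          using sets.sets_into_space[of a "G T"] by (intro CollectI exI[of _ "space M"] exI[of _ a]) auto
      qed
    qed
  next
    fix b assume "b \<in> prodsets S T"
    then obtain B C where b: "b = B \<inter> C" "B \<in> sets (G S)" "C \<in> sets (G T)" unfolding prodsets_def by auto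
    have "B \<in> sets (G (S \<union> T))" "C \<in> sets (G (S \<union> T))" using b G_mono[of S "S \<union> T"] G_mono[of T "S \<union> T"] by auto
    then have "b \<in> sets (G (S \<union> T))" using b by auto
    then show "b \<in> sigma_sets (space M) (gens (S \<union> T))" unfolding sets_G .
  qed
  then show ?thesis unfolding sets_G .
qed

end

context prob_space
begin

lemma emeasure_dens:
  fixes u :: "'a \<Rightarrow> real"
  assumes u: "integrable M u" and pos: "\<And>x. 0 \<le> u x" and D: "D \<in> sets M"
  shows "emeasure (density M (\<lambda>x. ennreal (u x))) D = ennreal (\<integral>x. indicator D x * u x \<partial>M)"
proof -
  have um: "u \<in> borel_measurable M" using u by (rule borel_measurable_integrable)
  have "emeasure (density M (\<lambda>x. ennreal (u x))) D = (\<integral>\<^sup>+ x. ennreal (u x) * indicator D x \<partial>M)"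
    by (rule emeasure_density) (use um D in auto)
  also have "\<dots> = (\<integral>\<^sup>+ x. ennreal (indicator D x * u x) \<partial>M)"
    by (rule nn_integral_cong) (simp split: split_indicator)
  also have "\<dots> = ennreal (\<integral>x. indicator D x * u x \<partial>M)"
  proof (rule nn_integral_eq_integral)
    show "integrable M (\<lambda>x. indicator D x * u x)"
      using integrable_mult_indicator[OF D u] by simp
  qed (simp add: pos)
  finally show ?thesis .
qed

lemma ext_nonneg:
  fixes u v :: "'a \<Rightarrow> real"
  assumes sub: "subalgebra M F" and Is: "Int_stable Gen" and GP: "Gen \<subseteq> Pow (space M)"
    and sF: "sets F = sigma_sets (space M) Gen" and top: "space M \<in> Gen"
    and u: "integrable M u" and v: "integrable M v"
    and upos: "\<And>x. 0 \<le> u x" and vpos: "\<And>x. 0 \<le> v x"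
    and eq: "\<And>D. D \<in> Gen \<Longrightarrow> (\<integral>x. indicator D x * u x \<partial>M) = (\<integral>x. indicator D x * v x \<partial>M)"
    and D: "D \<in> sets F"
  shows "(\<integral>x. indicator D x * u x \<partial>M) = (\<integral>x. indicator D x * v x \<partial>M)"
proof -
  define mu where "mu = restr_to_subalg (density M (\<lambda>x. ennreal (u x))) F"
  define nu where "nu = restr_to_subalg (density M (\<lambda>x. ennreal (v x))) F"
  have subu: "subalgebra (density M (\<lambda>x. ennreal (u x))) F"
    using sub unfolding subalgebra_def by simp
  have subv: "subalgebra (density M (\<lambda>x. ennreal (v x))) F"
    using sub unfolding subalgebra_def by simp
  have GM: "Gen \<subseteq> sets M" using sF sub unfolding subalgebra_def by auto
  have emu: "emeasure mu A = ennreal (\<integral>x. indicator A x * u x \<partial>M)" if A: "A \<in> sets F" for A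
  proof -
    have "A \<in> sets M" using A sub unfolding subalgebra_def by auto
    then show ?thesis unfolding mu_def
      using emeasure_restr_to_subalg[OF subu A] emeasure_dens[OF u upos] by simp
  qed
  have enu: "emeasure nu A = ennreal (\<integral>x. indicator A x * v x \<partial>M)" if A: "A \<in> sets F" for A
  proof -
    have "A \<in> sets M" using A sub unfolding subalgebra_def by auto
    then show ?thesis unfolding nu_def
      using emeasure_restr_to_subalg[OF subv A] emeasure_dens[OF v vpos] by simp
  qed
  have GF: "Gen \<subseteq> sets F" using sF by auto
  have "mu = nu"
  proof (rule measure_eqI_generator_eq[OF Is GP])
    fix X assume "X \<in> Gen"
    then show "emeasure mu X = emeasure nu X" using emu enu GF eq by auto
  next
    show "sets mu = sigma_sets (space M) Gen" unfolding mu_def using sets_restr_to_subalg[OF subu] sF by simp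
    show "sets nu = sigma_sets (space M) Gen" unfolding nu_def using sets_restr_to_subalg[OF subv] sF by simp
    show "range (\<lambda>i::nat. space M) \<subseteq> Gen" using top by auto
    show "(\<Union>i::nat. space M) = space M" by simp
    show "emeasure mu (space M) \<noteq> \<infinity>" for i::nat using emu top GF by auto
  qed
  then have "ennreal (\<integral>x. indicator D x * u x \<partial>M) = ennreal (\<integral>x. indicator D x * v x \<partial>M)"
    using emu[OF D] enu[OF D] by simp
  moreover have "0 \<le> (\<integral>x. indicator D x * u x \<partial>M)" "0 \<le> (\<integral>x. indicator D x * v x \<partial>M)"
    using upos vpos by (auto intro!: integral_nonneg_AE)
  ultimately show ?thesis by simp
qed

lemma ext_gen:
  fixes u v :: "'a \<Rightarrow> real"
  assumes sub: "subalgebra M F" and Is: "Int_stable Gen" and GP: "Gen \<subseteq> Pow (space M)"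
    and sF: "sets F = sigma_sets (space M) Gen" and top: "space M \<in> Gen"
    and u: "integrable M u" and v: "integrable M v"
    and eq: "\<And>D. D \<in> Gen \<Longrightarrow> (\<integral>x. indicator D x * u x \<partial>M) = (\<integral>x. indicator D x * v x \<partial>M)"
    and D: "D \<in> sets F"
  shows "(\<integral>x. indicator D x * u x \<partial>M) = (\<integral>x. indicator D x * v x \<partial>M)"
proof -
  define p where "p = (\<lambda>x. max (u x) 0 + max (- v x) 0)"
  define q where "q = (\<lambda>x. max (v x) 0 + max (- u x) 0)"
  have pi: "integrable M p" unfolding p_def using u v by auto
  have qi: "integrable M q" unfolding q_def using u v by auto
  have GM: "Gen \<subseteq> sets M" using sF sub unfolding subalgebra_def by auto
  have key: "(\<integral>x. indicator A x * p x \<partial>M) - (\<integral>x. indicator A x * q x \<partial>M)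
       = (\<integral>x. indicator A x * u x \<partial>M) - (\<integral>x. indicator A x * v x \<partial>M)" if A: "A \<in> sets M" for A
  proof -
    have i1: "integrable M (\<lambda>x. indicator A x * p x)" using integrable_mult_indicator[OF A pi] by simp
    have i2: "integrable M (\<lambda>x. indicator A x * q x)" using integrable_mult_indicator[OF A qi] by simp
    have i3: "integrable M (\<lambda>x. indicator A x * u x)" using integrable_mult_indicator[OF A u] by simp
    have i4: "integrable M (\<lambda>x. indicator A x * v x)" using integrable_mult_indicator[OF A v] by simp
    have "(\<integral>x. indicator A x * p x \<partial>M) - (\<integral>x. indicator A x * q x \<partial>M)
        = (\<integral>x. indicator A x * p x - indicator A x * q x \<partial>M)" using i1 i2 by simp
    also have "\<dots> = (\<integral>x. indicator A x * u x - indicator A x * v x \<partial>M)"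
      by (rule Bochner_Integration.integral_cong) (auto simp: p_def q_def max_def algebra_simps)
    also have "\<dots> = (\<integral>x. indicator A x * u x \<partial>M) - (\<integral>x. indicator A x * v x \<partial>M)" using i3 i4 by simp
    finally show ?thesis .
  qed
  have "(\<integral>x. indicator D x * p x \<partial>M) = (\<integral>x. indicator D x * q x \<partial>M)"
  proof (rule ext_nonneg[OF sub Is GP sF top pi qi])
    show "0 \<le> p x" for x unfolding p_def by simp
    show "0 \<le> q x" for x unfolding q_def by simp
    fix D assume "D \<in> Gen"
    then show "(\<integral>x. indicator D x * p x \<partial>M) = (\<integral>x. indicator D x * q x \<partial>M)"
      using key[of D] eq[of D] GM by auto
  qed (rule D)
  moreover have "D \<in> sets M" using D sub unfolding subalgebra_def by auto
  ultimately show ?thesis using key[of D] by simp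
qed

end

context sigma_finite_subalgebra
begin

lemma ce_ind_bounds:
  assumes "B \<in> sets M" "finite_measure M"
  shows "AE x in M. 0 \<le> real_cond_exp M F (indicator B) x \<and> real_cond_exp M F (indicator B) x \<le> 1"
proof -
  have i: "integrable M (indicator B :: _ \<Rightarrow> real)"
    using assms finite_measure.emeasure_finite[OF assms(2)] by (simp add: less_top)
  have "AE x in M. 0 \<le> real_cond_exp M F (indicator B) x"
    by (rule real_cond_exp_ge_c[OF i]) auto
  moreover have "AE x in M. real_cond_exp M F (indicator B) x \<le> 1"
    by (rule real_cond_exp_le_c[OF i]) (auto split: split_indicator)
  ultimately show ?thesis by auto
qed

end

context prob_space
begin

lemma lam_comm: "(\<lambda>x. f x * g x) = (\<lambda>x. g x * (f x::real))"
  by (rule ext) (rule mult.commute)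

lemma ind_integrable[simp]: "B \<in> sets M \<Longrightarrow> integrable M (indicator B :: 'a \<Rightarrow> real)"
  by (simp add: less_top[symmetric])

lemma bdd_mult_integrable:
  fixes h e :: "'a \<Rightarrow> real"
  assumes h: "integrable M h" and e: "e \<in> borel_measurable M" and b: "AE x in M. \<bar>e x\<bar> \<le> 1"
  shows "integrable M (\<lambda>x. e x * h x)"
proof (rule Bochner_Integration.integrable_bound[OF h])
  show "(\<lambda>x. e x * h x) \<in> borel_measurable M" using e borel_measurable_integrable[OF h] by simp
  show "AE x in M. norm (e x * h x) \<le> norm (h x)"
    using b by eventually_elim (auto simp: abs_mult intro: mult_left_le_one_le)
qed

lemma ce_ind_abs:
  assumes R: "sigma_finite_subalgebra M R" and B: "B \<in> sets M"
  shows "AE x in M. \<bar>real_cond_exp M R (indicator B) x\<bar> \<le> 1"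
proof -
  interpret R: sigma_finite_subalgebra M R by (rule R)
  show ?thesis using R.ce_ind_bounds[OF B finite_measure_axioms] by eventually_elim auto
qed

lemma swap:
  fixes h :: "'a \<Rightarrow> real"
  assumes R: "sigma_finite_subalgebra M R" and B: "B \<in> sets M" and h: "integrable M h"
  shows "(\<integral>x. h x * real_cond_exp M R (indicator B) x \<partial>M) = (\<integral>x. real_cond_exp M R h x * indicator B x \<partial>M)"
proof -
  interpret R: sigma_finite_subalgebra M R by (rule R)
  define e where "e = real_cond_exp M R (indicator B)"
  have em: "e \<in> borel_measurable R" unfolding e_def by simp
  have em2: "e \<in> borel_measurable M" unfolding e_def by simp
  have hm: "h \<in> borel_measurable M" using h by simp
  have eb: "AE x in M. \<bar>e x\<bar> \<le> 1" unfolding e_def by (rule ce_ind_abs[OF R B])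
  have ieh: "integrable M (\<lambda>x. e x * h x)" by (rule bdd_mult_integrable[OF h em2 eb])
  have "(\<integral>x. h x * e x \<partial>M) = (\<integral>x. e x * h x \<partial>M)" by (simp add: mult.commute)
  also have "\<dots> = (\<integral>x. e x * real_cond_exp M R h x \<partial>M)"
    by (rule R.real_cond_exp_intg(2)[symmetric, OF ieh em hm])
  also have "\<dots> = (\<integral>x. real_cond_exp M R h x * e x \<partial>M)" by (simp add: mult.commute)
  also have "\<dots> = (\<integral>x. real_cond_exp M R h x * indicator B x \<partial>M)"
    unfolding e_def
  proof (rule R.real_cond_exp_intg(2))
    show "integrable M (\<lambda>x. real_cond_exp M R h x * indicator B x)"
      using integrable_mult_indicator[OF B R.real_cond_exp_int(1)[OF h]] by (simp add: mult.commute)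
  qed (use B in auto)
  finally show ?thesis unfolding e_def .
qed

lemma ci_fun:
  fixes f :: "'a \<Rightarrow> real"
  assumes T: "sigma_finite_subalgebra M T" and R: "sigma_finite_subalgebra M R"
    and RT: "sets R \<subseteq> sets T" and S: "sigma_finite_subalgebra M S"
    and ind: "\<And>D. D \<in> sets S \<Longrightarrow> AE x in M. real_cond_exp M T (indicator D) x = real_cond_exp M R (indicator D) x"
    and f: "integrable M f" and fS: "f \<in> borel_measurable S"
  shows "AE x in M. real_cond_exp M T f x = real_cond_exp M R f x"
proof -
  interpret T: sigma_finite_subalgebra M T by (rule T)
  interpret R: sigma_finite_subalgebra M R by (rule R)
  interpret S: sigma_finite_subalgebra M S by (rule S)
  have subTR: "subalgebra T R" using T.subalg R.subalg RT unfolding subalgebra_def by auto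
  have fm[measurable]: "f \<in> borel_measurable M" using f by simp
  have TM: "sets T \<subseteq> sets M" using T.subalg unfolding subalgebra_def by auto
  have SM: "sets S \<subseteq> sets M" using S.subalg unfolding subalgebra_def by auto
  show ?thesis
  proof (rule T.real_cond_exp_charact)
    show "integrable M f" by (rule f)
    show "integrable M (real_cond_exp M R f)" by (rule R.real_cond_exp_int(1)[OF f])
    show "real_cond_exp M R f \<in> borel_measurable T"
      by (rule measurable_from_subalg[OF subTR]) simp
    fix Bt assume Bt: "Bt \<in> sets T"
    then have BtM[measurable]: "Bt \<in> sets M" using TM by auto
    define e where "e = real_cond_exp M R (indicator Bt)"
    have em: "e \<in> borel_measurable M" unfolding e_def by simp
    have eb: "AE x in M. \<bar>e x\<bar> \<le> 1" unfolding e_def by (rule ce_ind_abs[OF R BtM])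
    have ei: "integrable M e" unfolding e_def by (rule R.real_cond_exp_int(1)) (simp add: BtM)
    have i: "(\<integral>x. indicator D x * indicator Bt x \<partial>M) = (\<integral>x. indicator D x * e x \<partial>M)" if D: "D \<in> sets S" for D
    proof -
      have DM: "D \<in> sets M" using D SM by auto
      have "(\<integral>x. indicator D x * indicator Bt x \<partial>M) = (\<integral>x. indicator Bt x * indicator D x \<partial>M :: real)"
        by (rule arg_cong[where f="integral\<^sup>L M"], rule lam_comm)
      also have "\<dots> = (\<integral>x. indicator Bt x * real_cond_exp M T (indicator D) x \<partial>M)"
      proof (rule T.real_cond_exp_intg(2)[symmetric])
        show "integrable M (\<lambda>x. indicator Bt x * indicator D x :: real)"
          using integrable_mult_indicator[OF BtM ind_integrable[OF DM]] by simp
      qed (use Bt DM in auto)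
      also have "\<dots> = (\<integral>x. indicator Bt x * real_cond_exp M R (indicator D) x \<partial>M)"
        by (rule integral_cong_AE) (measurable, measurable, use ind[OF D] in auto)
      also have "\<dots> = (\<integral>x. e x * indicator D x \<partial>M)"
        unfolding e_def by (rule swap[OF R DM]) (simp add: BtM)
      finally show ?thesis by (simp add: mult.commute)
    qed
    have ii: "AE x in M. real_cond_exp M S (indicator Bt) x = real_cond_exp M S e x"
    proof (rule S.real_cond_exp_charact)
      fix A assume A: "A \<in> sets S"
      have "(\<integral>x\<in>A. indicator Bt x \<partial>M) = (\<integral>x\<in>A. e x \<partial>M)"
        using i[OF A] unfolding set_lebesgue_integral_def by simp
      also have "\<dots> = (\<integral>x\<in>A. real_cond_exp M S e x \<partial>M)"
        by (rule S.real_cond_exp_intA[OF ei A])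
      finally show "(\<integral>x\<in>A. indicator Bt x \<partial>M) = (\<integral>x\<in>A. real_cond_exp M S e x \<partial>M)" .
    next
      show "integrable M (indicator Bt :: _ \<Rightarrow> real)" using BtM by simp
      show "integrable M (real_cond_exp M S e)" by (rule S.real_cond_exp_int(1)[OF ei])
    qed simp
    have "(\<integral>x\<in>Bt. f x \<partial>M) = (\<integral>x. f x * indicator Bt x \<partial>M)"
      unfolding set_lebesgue_integral_def by (simp add: mult.commute)
    also have "\<dots> = (\<integral>x. f x * real_cond_exp M S (indicator Bt) x \<partial>M)"
    proof (rule S.real_cond_exp_intg(2)[symmetric, OF _ fS])
      show "integrable M (\<lambda>x. f x * indicator Bt x)"
        using integrable_mult_indicator[OF BtM f] by (simp add: mult.commute)
    qed (use BtM in simp)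
    also have "\<dots> = (\<integral>x. f x * real_cond_exp M S e x \<partial>M)"
      by (rule integral_cong_AE) (use ii in auto)
    also have "\<dots> = (\<integral>x. f x * e x \<partial>M)"
    proof (rule S.real_cond_exp_intg(2)[OF _ fS em])
      show "integrable M (\<lambda>x. f x * e x)"
        using bdd_mult_integrable[OF f em eb] by (simp add: mult.commute)
    qed
    also have "\<dots> = (\<integral>x. real_cond_exp M R f x * indicator Bt x \<partial>M)"
      unfolding e_def by (rule swap[OF R BtM f])
    also have "\<dots> = (\<integral>x\<in>Bt. real_cond_exp M R f x \<partial>M)"
      unfolding set_lebesgue_integral_def by (simp add: mult.commute)
    finally show "(\<integral>x\<in>Bt. f x \<partial>M) = (\<integral>x\<in>Bt. real_cond_exp M R f x \<partial>M)" .
  qed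
qed

end

locale bn = gsetup M N X V for M :: "'a measure" and N :: "'v \<Rightarrow> 'b measure" and X V +
  fixes E :: "('v \<times> 'v) set" and A Y :: 'v
  assumes dag: "is_DAG V E" and lm: "local_markov M N X V E"
    and AV: "A \<in> V" and YV: "Y \<in> V" and AY: "A \<noteq> Y" and irr: "irrel V E A Y = {}"
begin

lemma EV: "E \<subseteq> V \<times> V" and finV: "finite V" and acyc: "acyclic E"
  using dag unfolding is_DAG_def by auto

lemma pa_V: "pa E v \<subseteq> V"
  using EV unfolding pa_def by auto

lemma pa_not_de: "p \<in> pa E v \<Longrightarrow> p \<notin> de V E v"
proof
  assume p: "p \<in> pa E v" and d: "p \<in> de V E v"
  then have "(p, v) \<in> E" "(v, p) \<in> E\<^sup>*" unfolding pa_def de_def by auto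
  then have "(p, p) \<in> E\<^sup>+" by (rule rtrancl_into_trancl2)
  then show False using acyc unfolding acyclic_def by blast
qed

lemma sfsG: "S \<subseteq> V \<Longrightarrow> sigma_finite_subalgebra M (G S)" by (rule sfs)

lemma lm2:
  assumes v: "v \<in> V" and D: "D \<in> sets (G {v})"
  shows "AE x in M. real_cond_exp M (G (V - de V E v)) (indicator D) x
                  = real_cond_exp M (G (pa E v)) (indicator D) x"
proof -
  define ND where "ND = V - de V E v - pa E v"
  define P where "P = pa E v"
  have eqset: "V - de V E v = ND \<union> P" unfolding ND_def P_def using pa_V pa_not_de by auto
  have NDV: "ND \<subseteq> V" and PV: "P \<subseteq> V" unfolding ND_def P_def using pa_V by auto
  have ci: "\<And>B. B \<in> sets (G ND) \<Longrightarrow> AE x in M. real_cond_exp M (G P) (\<lambda>x. indicator D x * indicator B x) x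
        = real_cond_exp M (G P) (indicator D) x * real_cond_exp M (G P) (indicator B) x"
    using lm v D unfolding local_markov_def cond_indep_def ND_def P_def by blast
  interpret Tn: sigma_finite_subalgebra M "G (ND \<union> P)" by (rule sfs) (use NDV PV in auto)
  interpret Pp: sigma_finite_subalgebra M "G P" by (rule sfs[OF PV])
  have DM[measurable]: "D \<in> sets M" using sets_M[OF D] v by auto
  have iD: "integrable M (indicator D :: _ \<Rightarrow> real)" using DM by simp
  have ie: "integrable M (real_cond_exp M (G P) (indicator D))" by (rule Pp.real_cond_exp_int(1)[OF iD])
  have "AE x in M. real_cond_exp M (G (ND \<union> P)) (indicator D) x = real_cond_exp M (G P) (indicator D) x"
  proof (rule Tn.real_cond_exp_charact)
    show "integrable M (indicator D :: _ \<Rightarrow> real)" by (rule iD)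
    show "integrable M (real_cond_exp M (G P) (indicator D))" by (rule ie)
    show "real_cond_exp M (G P) (indicator D) \<in> borel_measurable (G (ND \<union> P))"
      by (rule meas_lift[of _ P]) auto
    fix A' assume A': "A' \<in> sets (G (ND \<union> P))"
    have "(\<integral>x. indicator A' x * indicator D x \<partial>M) = (\<integral>x. indicator A' x * real_cond_exp M (G P) (indicator D) x \<partial>M)"
    proof (rule ext_gen[OF subalg prodsets_Int_stable prodsets_Pow sets_G_Un space_prodsets iD ie _ A'])
      show "ND \<union> P \<subseteq> V" using NDV PV by auto
      fix D' assume "D' \<in> prodsets ND P"
      then obtain B C where D': "D' = B \<inter> C" and B: "B \<in> sets (G ND)" and C: "C \<in> sets (G P)"
        unfolding prodsets_def by auto
      have BM[measurable]: "B \<in> sets M" using sets_M[OF B NDV] .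
      have CM[measurable]: "C \<in> sets M" using sets_M[OF C PV] .
      have "(\<integral>x. indicator D' x * indicator D x \<partial>M) = (\<integral>x. indicator C x * (indicator D x * indicator B x) \<partial>M :: real)"
        unfolding D' by (rule arg_cong[where f="integral\<^sup>L M"]) (rule ext, simp add: indicator_inter_arith mult_ac)
      also have "\<dots> = (\<integral>x. indicator C x * real_cond_exp M (G P) (\<lambda>x. indicator D x * indicator B x) x \<partial>M)"
      proof (rule Pp.real_cond_exp_intg(2)[symmetric])
        show "integrable M (\<lambda>x. indicator C x * (indicator D x * indicator B x) :: real)"
          using integrable_mult_indicator[OF CM integrable_mult_indicator[OF DM ind_integrable[OF BM]]] by simp
      qed (use C in auto)
      also have "\<dots> = (\<integral>x. indicator C x * (real_cond_exp M (G P) (indicator D) x * real_cond_exp M (G P) (indicator B) x) \<partial>M)"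
        by (rule integral_cong_AE) (measurable, measurable, use ci[OF B] in auto)
      also have "\<dots> = (\<integral>x. (indicator C x * real_cond_exp M (G P) (indicator D) x) * real_cond_exp M (G P) (indicator B) x \<partial>M)"
        by (simp add: mult.assoc)
      also have "\<dots> = (\<integral>x. (indicator C x * real_cond_exp M (G P) (indicator D) x) * indicator B x \<partial>M)"
      proof (rule Pp.real_cond_exp_intg(2))
        show "integrable M (\<lambda>x. (indicator C x * real_cond_exp M (G P) (indicator D) x) * indicator B x)"
          using integrable_mult_indicator[OF BM integrable_mult_indicator[OF CM ie]] by (simp add: mult_ac)
      qed (use C in auto)
      also have "\<dots> = (\<integral>x. indicator D' x * real_cond_exp M (G P) (indicator D) x \<partial>M)"
        unfolding D' by (rule arg_cong[where f="integral\<^sup>L M"]) (rule ext, simp add: indicator_inter_arith mult_ac)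
      finally show "(\<integral>x. indicator D' x * indicator D x \<partial>M) = (\<integral>x. indicator D' x * real_cond_exp M (G P) (indicator D) x \<partial>M)" .
    qed
    then show "(\<integral>x\<in>A'. indicator D x \<partial>M) = (\<integral>x\<in>A'. real_cond_exp M (G P) (indicator D) x \<partial>M)"
      unfolding set_lebesgue_integral_def by simp
  qed
  then show ?thesis unfolding eqset P_def .
qed

lemma lm_tower:
  assumes v: "v \<in> V" and D: "D \<in> sets (G {v})" and T1: "pa E v \<subseteq> T" and T2: "T \<subseteq> V - de V E v"
  shows "AE x in M. real_cond_exp M (G T) (indicator D) x = real_cond_exp M (G (pa E v)) (indicator D) x"
proof -
  have TV: "T \<subseteq> V" using T2 by auto
  interpret Tt: sigma_finite_subalgebra M "G T" by (rule sfs[OF TV])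
  have DM[measurable]: "D \<in> sets M" using sets_M[OF D] v by auto
  have iD: "integrable M (indicator D :: _ \<Rightarrow> real)" using DM by simp
  have "AE x in M. real_cond_exp M (G T) (real_cond_exp M (G (V - de V E v)) (indicator D)) x = real_cond_exp M (G T) (indicator D) x"
    by (rule Tt.real_cond_exp_nested_subalg[OF subalg subalg2[OF T2] iD]) auto
  moreover have "AE x in M. real_cond_exp M (G T) (real_cond_exp M (G (V - de V E v)) (indicator D)) x
      = real_cond_exp M (G T) (real_cond_exp M (G (pa E v)) (indicator D)) x"
    by (rule Tt.real_cond_exp_cong[OF lm2[OF v D]]) auto
  moreover have "AE x in M. real_cond_exp M (G T) (real_cond_exp M (G (pa E v)) (indicator D)) x
      = real_cond_exp M (G (pa E v)) (indicator D) x"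
  proof (rule Tt.real_cond_exp_F_meas)
    interpret Pp: sigma_finite_subalgebra M "G (pa E v)" by (rule sfs[OF pa_V])
    show "integrable M (real_cond_exp M (G (pa E v)) (indicator D))" by (rule Pp.real_cond_exp_int(1)[OF iD])
    show "real_cond_exp M (G (pa E v)) (indicator D) \<in> borel_measurable (G T)"
      by (rule meas_lift[OF _ T1]) simp
  qed
  ultimately show ?thesis by auto
qed

end

context prob_space
begin

lemma ci_ext:
  assumes T: "sigma_finite_subalgebra M T" and R: "sigma_finite_subalgebra M R"
    and RT: "sets R \<subseteq> sets T" and sub: "subalgebra M F"
    and Is: "Int_stable Gen" and GP: "Gen \<subseteq> Pow (space M)"
    and sF: "sets F = sigma_sets (space M) Gen" and top: "space M \<in> Gen"
    and hyp: "\<And>D. D \<in> Gen \<Longrightarrow> AE x in M. real_cond_exp M T (indicator D) x = real_cond_exp M R (indicator D) x"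
    and D: "D \<in> sets F"
  shows "AE x in M. real_cond_exp M T (indicator D) x = real_cond_exp M R (indicator D) x"
proof -
  interpret T: sigma_finite_subalgebra M T by (rule T)
  interpret R: sigma_finite_subalgebra M R by (rule R)
  have subTR: "subalgebra T R" using T.subalg R.subalg RT unfolding subalgebra_def by auto
  have TM: "sets T \<subseteq> sets M" using T.subalg unfolding subalgebra_def by auto
  have FM: "sets F \<subseteq> sets M" using sub unfolding subalgebra_def by auto
  have GM: "Gen \<subseteq> sets M" using sF FM by auto
  have DM[measurable]: "D \<in> sets M" using D FM by auto
  show ?thesis
  proof (rule T.real_cond_exp_charact)
    show "integrable M (indicator D :: _ \<Rightarrow> real)" by simp
    show "integrable M (real_cond_exp M R (indicator D))" by (rule R.real_cond_exp_int(1)) simp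
    show "real_cond_exp M R (indicator D) \<in> borel_measurable T"
      by (rule measurable_from_subalg[OF subTR]) simp
    fix Bt assume Bt: "Bt \<in> sets T"
    then have BtM[measurable]: "Bt \<in> sets M" using TM by auto
    have iBt: "integrable M (indicator Bt :: _ \<Rightarrow> real)" by simp
    have ie: "integrable M (real_cond_exp M R (indicator Bt))" by (rule R.real_cond_exp_int(1)[OF iBt])
    have "(\<integral>x. indicator D x * indicator Bt x \<partial>M) = (\<integral>x. indicator D x * real_cond_exp M R (indicator Bt) x \<partial>M)"
    proof (rule ext_gen[OF sub Is GP sF top iBt ie _ D])
      fix D' assume D': "D' \<in> Gen"
      then have D'M[measurable]: "D' \<in> sets M" using GM by auto
      have "(\<integral>x. indicator D' x * indicator Bt x \<partial>M) = (\<integral>x. indicator Bt x * indicator D' x \<partial>M :: real)"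
        by (rule arg_cong[where f="integral\<^sup>L M"], rule lam_comm)
      also have "\<dots> = (\<integral>x. indicator Bt x * real_cond_exp M T (indicator D') x \<partial>M)"
      proof (rule T.real_cond_exp_intg(2)[symmetric])
        show "integrable M (\<lambda>x. indicator Bt x * indicator D' x :: real)"
          using integrable_mult_indicator[OF BtM ind_integrable[OF D'M]] by simp
      qed (use Bt in auto)
      also have "\<dots> = (\<integral>x. indicator Bt x * real_cond_exp M R (indicator D') x \<partial>M)"
        by (rule integral_cong_AE) (measurable, measurable, use hyp[OF D'] in auto)
      also have "\<dots> = (\<integral>x. real_cond_exp M R (indicator Bt) x * indicator D' x \<partial>M)"
        by (rule swap[OF R D'M iBt])
      finally show "(\<integral>x. indicator D' x * indicator Bt x \<partial>M) = (\<integral>x. indicator D' x * real_cond_exp M R (indicator Bt) x \<partial>M)"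
        by (simp add: mult.commute)
    qed
    also have "\<dots> = (\<integral>x. indicator Bt x * real_cond_exp M R (indicator D) x \<partial>M)"
      using swap[OF R BtM ind_integrable[OF DM]] by (simp add: mult.commute)
    finally show "(\<integral>x\<in>Bt. indicator D x \<partial>M) = (\<integral>x\<in>Bt. real_cond_exp M R (indicator D) x \<partial>M)"
      unfolding set_lebesgue_integral_def by (simp add: mult.commute)
  qed
qed

end

context bn
begin

abbreviation "Wn \<equiv> nondesc V E A"
abbreviation "On \<equiv> Oset V E A Y"
abbreviation "Cn \<equiv> cn V E A Y"
abbreviation "Pa \<equiv> pa E A"

lemma Cn_V: "Cn \<subseteq> V" and A_Cn: "A \<notin> Cn"
  unfolding cn_def by auto

lemma Wn_V: "Wn \<subseteq> V" and A_Wn: "A \<notin> Wn"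
  unfolding nondesc_def de_def using AV by auto

lemma On_V: "On \<subseteq> V"
  unfolding Oset_def pa_set_def using pa_V by auto

lemma A_On: "A \<notin> On"
  unfolding Oset_def by auto

lemma Cn_de_set: "Cn \<subseteq> de_set V E Cn"
proof
  fix c assume c: "c \<in> Cn"
  then have "c \<in> de V E c" using Cn_V unfolding de_def by auto
  then show "c \<in> de_set V E Cn" unfolding de_set_def using c by blast
qed

lemma On_Cn: "On \<inter> Cn = {}"
  unfolding Oset_def using Cn_de_set by auto

lemma On_Wn: "On \<subseteq> Wn"
proof
  fix z assume z: "z \<in> On"
  then obtain c where c: "c \<in> Cn" "(z, c) \<in> E" and nd: "z \<notin> de_set V E Cn" "z \<noteq> A"
    unfolding Oset_def pa_set_def pa_def by auto
  have oV: "z \<in> V" using c EV by auto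
  show "z \<in> Wn"
  proof (rule ccontr)
    assume "z \<notin> Wn"
    then have Ao: "(A, z) \<in> E\<^sup>*" unfolding nondesc_def de_def using oV by auto
    have "(c, Y) \<in> E\<^sup>*" using c unfolding cn_def by auto
    then have "(z, Y) \<in> E\<^sup>*" by (rule converse_rtrancl_into_rtrancl[OF c(2)])
    then have "z \<in> Cn" unfolding cn_def using oV Ao nd by auto
    then show False using nd Cn_de_set by auto
  qed
qed

lemma Pa_Wn: "Pa \<subseteq> Wn"
  unfolding nondesc_def using pa_V pa_not_de by auto

lemma nd_Cn:
  assumes c: "c \<in> Cn"
  shows "Wn \<union> {A} \<subseteq> V - de V E c"
proof
  fix w assume w: "w \<in> Wn \<union> {A}"
  have Ac: "(A, c) \<in> E\<^sup>*" "c \<noteq> A" using c unfolding cn_def by auto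
  show "w \<in> V - de V E c"
  proof (cases "w = A")
    case True
    have "(c, A) \<notin> E\<^sup>*"
    proof
      assume cA: "(c, A) \<in> E\<^sup>*"
      have Ac2: "(A, c) \<in> E\<^sup>+" using Ac rtrancl_eq_or_trancl by metis
      have "(A, A) \<in> E\<^sup>+" by (rule trancl_rtrancl_trancl[OF Ac2 cA])
      then show False using acyc unfolding acyclic_def by blast
    qed
    then show ?thesis using True AV unfolding de_def by auto
  next
    case False
    then have wW: "w \<in> Wn" using w by auto
    then have "w \<in> V" "(A, w) \<notin> E\<^sup>*" unfolding nondesc_def de_def by auto
    moreover have "(c, w) \<notin> E\<^sup>*" using Ac(1) \<open>(A, w) \<notin> E\<^sup>*\<close> rtrancl_trans by metis
    ultimately show ?thesis unfolding de_def by auto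
  qed
qed

lemma pa_Cn:
  assumes c: "c \<in> Cn"
  shows "pa E c \<subseteq> On \<union> {A} \<union> Cn"
proof
  fix p assume p: "p \<in> pa E c"
  have pV: "p \<in> V" using p pa_V by auto
  show "p \<in> On \<union> {A} \<union> Cn"
  proof (cases "p \<in> Cn \<or> p = A")
    case True then show ?thesis by auto
  next
    case False
    have "p \<notin> de_set V E Cn"
    proof
      assume "p \<in> de_set V E Cn"
      then obtain c' where c': "c' \<in> Cn" "(c', p) \<in> E\<^sup>*" unfolding de_set_def de_def by auto
      have "(A, c') \<in> E\<^sup>*" using c' unfolding cn_def by auto
      then have Ap: "(A, p) \<in> E\<^sup>*" using c'(2) by (rule rtrancl_trans)
      have "(c, Y) \<in> E\<^sup>*" using c unfolding cn_def by auto
      moreover have "(p, c) \<in> E" using p unfolding pa_def by auto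
      ultimately have "(p, Y) \<in> E\<^sup>*" by (rule converse_rtrancl_into_rtrancl[rotated])
      then have "p \<in> Cn" unfolding cn_def using pV Ap False by auto
      then show False using False by auto
    qed
    then have "p \<in> On" unfolding Oset_def pa_set_def using p c False by auto
    then show ?thesis by auto
  qed
qed

lemma wf_desc: "wf ((E\<^sup>+)\<inverse>)"
proof -
  have "finite E" by (rule finite_subset[OF EV finite_cartesian_product[OF finV finV]])
  then have "wf (E\<inverse>)" using acyc by (rule finite_acyclic_wf_converse)
  then have "wf ((E\<inverse>)\<^sup>+)" by (rule wf_trancl)
  then show ?thesis by (simp add: trancl_converse)
qed

lemma exists_max:
  assumes "c0 \<in> Q"
  shows "\<exists>c\<in>Q. \<forall>q\<in>Q. (c, q) \<notin> E\<^sup>+"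
proof -
  obtain z where z: "z \<in> Q" "\<And>y. (y, z) \<in> (E\<^sup>+)\<inverse> \<Longrightarrow> y \<notin> Q"
    using wf_eq_minimal[THEN iffD1, rule_format, OF wf_desc assms] by blast
  show ?thesis using z by blast
qed

end

context bn
begin

lemma step_tx:
  assumes c: "c \<in> V" and Tx1: "pa E c \<subseteq> Tx" and Tx2: "Tx \<subseteq> V - de V E c"
    and D1: "D1 \<in> sets (G Tx)" and D2: "D2 \<in> sets (G {c})" and T0: "Tx0 \<subseteq> Tx"
  shows "AE x in M. real_cond_exp M (G Tx0) (indicator (D1 \<inter> D2)) x
       = real_cond_exp M (G Tx0) (\<lambda>x. indicator D1 x * real_cond_exp M (G (pa E c)) (indicator D2) x) x"
proof -
  have TxV: "Tx \<subseteq> V" using Tx2 by auto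
  have T0V: "Tx0 \<subseteq> V" using T0 TxV by auto
  interpret T0: sigma_finite_subalgebra M "G Tx0" by (rule sfs[OF T0V])
  interpret Tx: sigma_finite_subalgebra M "G Tx" by (rule sfs[OF TxV])
  have D1M[measurable]: "D1 \<in> sets M" using sets_M[OF D1 TxV] .
  have D2M[measurable]: "D2 \<in> sets M" using sets_M[OF D2] c by auto
  define h where "h = real_cond_exp M (G (pa E c)) (indicator D2)"
  have hm[measurable]: "h \<in> borel_measurable M" unfolding h_def by simp
  have ind_eq: "indicator (D1 \<inter> D2) = (\<lambda>x. indicator D1 x * indicator D2 x :: real)"
    by (rule ext) (simp add: indicator_inter_arith)
  have i12: "integrable M (indicator (D1 \<inter> D2) :: _ \<Rightarrow> real)" by simp
  have a: "AE x in M. real_cond_exp M (G Tx0) (real_cond_exp M (G Tx) (indicator (D1 \<inter> D2))) x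
      = real_cond_exp M (G Tx0) (indicator (D1 \<inter> D2)) x"
    by (rule T0.real_cond_exp_nested_subalg[OF subalg[OF TxV] subalg2[OF T0] i12])
  have b: "AE x in M. real_cond_exp M (G Tx) (\<lambda>x. indicator D1 x * indicator D2 x) x
      = indicator D1 x * real_cond_exp M (G Tx) (indicator D2) x"
  proof (rule Tx.real_cond_exp_mult)
    show "indicator D1 \<in> borel_measurable (G Tx)" using D1 by simp
    show "integrable M (\<lambda>x. indicator D1 x * indicator D2 x :: real)"
      using integrable_mult_indicator[OF D1M ind_integrable[OF D2M]] by simp
  qed simp
  have cc: "AE x in M. real_cond_exp M (G Tx) (indicator D2) x = h x"
    unfolding h_def by (rule lm_tower[OF c D2 Tx1 Tx2])
  have bc: "AE x in M. real_cond_exp M (G Tx) (indicator (D1 \<inter> D2)) x = indicator D1 x * h x"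
    using b cc unfolding ind_eq by eventually_elim simp
  have d: "AE x in M. real_cond_exp M (G Tx0) (real_cond_exp M (G Tx) (indicator (D1 \<inter> D2))) x
      = real_cond_exp M (G Tx0) (\<lambda>x. indicator D1 x * h x) x"
    by (rule T0.real_cond_exp_cong[OF bc]) simp_all
  show ?thesis using a d unfolding h_def by eventually_elim simp
qed

lemma Kind:
  assumes "finite Q" "Q \<subseteq> Cn" "\<forall>c\<in>Q. pa E c \<inter> Cn \<subseteq> Q"
  shows "\<forall>D \<in> sets (G (Q \<union> (On \<union> {A}))). AE x in M.
           real_cond_exp M (G (Wn \<union> {A})) (indicator D) x = real_cond_exp M (G (On \<union> {A})) (indicator D) x"
  using assms
proof (induction "card Q" arbitrary: Q rule: less_induct)
  case less
  define T where "T = Wn \<union> {A}"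
  define R where "R = On \<union> {A}"
  have TV: "T \<subseteq> V" unfolding T_def using Wn_V AV by auto
  have RV: "R \<subseteq> V" unfolding R_def using On_V AV by auto
  have RT: "R \<subseteq> T" unfolding R_def T_def using On_Wn by auto
  interpret Tt: sigma_finite_subalgebra M "G T" by (rule sfs[OF TV])
  interpret Rr: sigma_finite_subalgebra M "G R" by (rule sfs[OF RV])
  show ?case unfolding T_def[symmetric] R_def[symmetric]
  proof (cases "Q = {}")
    case True
    show "\<forall>D \<in> sets (G (Q \<union> R)). AE x in M. real_cond_exp M (G T) (indicator D) x = real_cond_exp M (G R) (indicator D) x"
    proof
      fix D assume "D \<in> sets (G (Q \<union> R))"
      then have D: "D \<in> sets (G R)" using True by simp
      have DM[measurable]: "D \<in> sets M" using sets_M[OF D RV] .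
      have "AE x in M. real_cond_exp M (G T) (indicator D) x = indicator D x"
        by (rule Tt.real_cond_exp_F_meas) (simp, use sets_lift[OF D RT] in simp)
      moreover have "AE x in M. real_cond_exp M (G R) (indicator D) x = indicator D x"
        by (rule Rr.real_cond_exp_F_meas) (simp, use D in simp)
      ultimately show "AE x in M. real_cond_exp M (G T) (indicator D) x = real_cond_exp M (G R) (indicator D) x"
        by auto
    qed
  next
    case False
    then obtain c0 where "c0 \<in> Q" by auto
    then obtain c where cQ: "c \<in> Q" and cmax: "\<forall>q\<in>Q. (c, q) \<notin> E\<^sup>+" using exists_max by blast
    define Q' where "Q' = Q - {c}"
    have cardQ': "card Q' < card Q" unfolding Q'_def using cQ less.prems(1) by (meson card_Diff1_less)
    have Q'C: "Q' \<subseteq> Cn" unfolding Q'_def using less.prems(2) by auto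
    have finQ': "finite Q'" unfolding Q'_def using less.prems(1) by auto
    have clQ': "\<forall>q\<in>Q'. pa E q \<inter> Cn \<subseteq> Q'"
    proof (intro ballI subsetI)
      fix q p assume q: "q \<in> Q'" and p: "p \<in> pa E q \<inter> Cn"
      then have "p \<in> Q" using less.prems(3) unfolding Q'_def by auto
      moreover have "p \<noteq> c"
      proof
        assume "p = c"
        then have "(c, q) \<in> E" using p unfolding pa_def by auto
        then show False using cmax q unfolding Q'_def by auto
      qed
      ultimately show "p \<in> Q'" unfolding Q'_def by auto
    qed
    have IH: "\<forall>D \<in> sets (G (Q' \<union> R)). AE x in M. real_cond_exp M (G T) (indicator D) x = real_cond_exp M (G R) (indicator D) x"
      using less.hyps[OF cardQ' finQ' Q'C clQ'] unfolding T_def R_def .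
    have cC: "c \<in> Cn" using cQ less.prems(2) by auto
    have cV: "c \<in> V" using cC Cn_V by auto
    have Q'V: "Q' \<subseteq> V" using Q'C Cn_V by auto
    have c_not_pa: "c \<notin> pa E c"
    proof
      assume "c \<in> pa E c"
      then have "(c, c) \<in> E\<^sup>+" unfolding pa_def by auto
      then show False using acyc unfolding acyclic_def by blast
    qed
    have pac: "pa E c \<subseteq> Q' \<union> R"
    proof
      fix p assume p: "p \<in> pa E c"
      then have "p \<in> On \<union> {A} \<union> Cn" using pa_Cn[OF cC] by auto
      moreover have "p \<in> Cn \<Longrightarrow> p \<in> Q" using less.prems(3) cQ p by auto
      ultimately show "p \<in> Q' \<union> R" unfolding Q'_def R_def using c_not_pa p by auto
    qed
    have Q'nd: "Q' \<subseteq> V - de V E c"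
    proof
      fix q assume q: "q \<in> Q'"
      have "(c, q) \<notin> E\<^sup>*"
      proof
        assume "(c, q) \<in> E\<^sup>*"
        moreover have "q \<noteq> c" using q unfolding Q'_def by auto
        ultimately have "(c, q) \<in> E\<^sup>+" using rtrancl_eq_or_trancl by metis
        then show False using cmax q unfolding Q'_def by auto
      qed
      then show "q \<in> V - de V E c" using q Q'V unfolding de_def by auto
    qed
    have Tnd: "T \<subseteq> V - de V E c" unfolding T_def by (rule nd_Cn[OF cC])
    have Rnd: "R \<subseteq> V - de V E c" using Tnd RT by auto
    have QR: "Q \<union> R = (Q' \<union> R) \<union> {c}" unfolding Q'_def using cQ by auto
    have QRV: "Q \<union> R \<subseteq> V" using less.prems(2) Cn_V RV by auto
    have hyp: "AE x in M. real_cond_exp M (G T) (indicator D'') x = real_cond_exp M (G R) (indicator D'') x"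
      if D'': "D'' \<in> prodsets (Q' \<union> R) {c}" for D''
    proof -
      obtain D1 D2 where DD: "D'' = D1 \<inter> D2" and D1: "D1 \<in> sets (G (Q' \<union> R))" and D2: "D2 \<in> sets (G {c})"
        using D'' unfolding prodsets_def by auto
      define h where "h = real_cond_exp M (G (pa E c)) (indicator D2)"
      define f where "f = (\<lambda>x. indicator D1 x * h x)"
      have D2M[measurable]: "D2 \<in> sets M" using sets_M[OF D2] cV by auto
      interpret Pc: sigma_finite_subalgebra M "G (pa E c)" by (rule sfs[OF pa_V])
      have hi: "integrable M h" unfolding h_def by (rule Pc.real_cond_exp_int(1)) simp
      have D1M: "D1 \<in> sets M" using sets_M[OF D1] Q'V RV by auto
      have fi: "integrable M f" unfolding f_def using integrable_mult_indicator[OF D1M hi] by simp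
      have hm: "h \<in> borel_measurable (G (Q' \<union> R))" unfolding h_def by (rule meas_lift[OF _ pac]) simp
      have fm: "f \<in> borel_measurable (G (Q' \<union> R))" unfolding f_def using D1 hm by simp
      have e1: "AE x in M. real_cond_exp M (G T) (indicator D'') x = real_cond_exp M (G T) f x"
        unfolding DD f_def h_def
      proof (rule step_tx[OF cV _ _ _ D2, of "T \<union> Q'"])
        show "pa E c \<subseteq> T \<union> Q'" using pac RT by auto
        show "T \<union> Q' \<subseteq> V - de V E c" using Tnd Q'nd by auto
        show "D1 \<in> sets (G (T \<union> Q'))" by (rule sets_lift[OF D1]) (use RT in auto)
      qed auto
      have e2: "AE x in M. real_cond_exp M (G R) (indicator D'') x = real_cond_exp M (G R) f x"
        unfolding DD f_def h_def
      proof (rule step_tx[OF cV _ _ _ D2, of "R \<union> Q'"])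
        show "pa E c \<subseteq> R \<union> Q'" using pac by auto
        show "R \<union> Q' \<subseteq> V - de V E c" using Rnd Q'nd by auto
        show "D1 \<in> sets (G (R \<union> Q'))" by (rule sets_lift[OF D1]) auto
      qed auto
      have e3: "AE x in M. real_cond_exp M (G T) f x = real_cond_exp M (G R) f x"
      proof (rule ci_fun[OF sfs[OF TV] sfs[OF RV] G_mono[OF RT] sfs _ fi fm])
        show "Q' \<union> R \<subseteq> V" using Q'V RV by auto
        fix D assume "D \<in> sets (G (Q' \<union> R))"
        then show "AE x in M. real_cond_exp M (G T) (indicator D) x = real_cond_exp M (G R) (indicator D) x"
          using IH by auto
      qed
      show ?thesis using e1 e2 e3 by auto
    qed
    show "\<forall>D \<in> sets (G (Q \<union> R)). AE x in M. real_cond_exp M (G T) (indicator D) x = real_cond_exp M (G R) (indicator D) x"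
    proof
      fix D assume D: "D \<in> sets (G (Q \<union> R))"
      show "AE x in M. real_cond_exp M (G T) (indicator D) x = real_cond_exp M (G R) (indicator D) x"
      proof (rule ci_ext[OF sfs[OF TV] sfs[OF RV] G_mono[OF RT] subalg[OF QRV] prodsets_Int_stable prodsets_Pow _ space_prodsets hyp D])
        show "sets (G (Q \<union> R)) = sigma_sets (space M) (prodsets (Q' \<union> R) {c})"
          unfolding QR by (rule sets_G_Un)
      qed
    qed
  qed
qed

end

context sigma_finite_subalgebra
begin

lemma nn_real_ce:
  fixes g :: "'a \<Rightarrow> real"
  assumes g: "integrable M g" and gpos: "\<And>x. 0 \<le> g x"
  shows "AE x in M. nn_cond_exp M F (\<lambda>x. ennreal (g x)) x = ennreal (real_cond_exp M F g x)"
proof -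
  have gm[measurable]: "g \<in> borel_measurable M" using g by simp
  have z: "(\<lambda>x. ennreal (- g x)) = (\<lambda>x. 0)"
    by (rule ext) (simp add: gpos ennreal_neg)
  have "AE x in M. (\<lambda>x. 0::ennreal) x = nn_cond_exp M F (\<lambda>x. 0) x"
    by (rule nn_cond_exp_F_meas) simp
  then have "AE x in M. nn_cond_exp M F (\<lambda>x. 0) x = 0" by auto
  then have z2: "AE x in M. nn_cond_exp M F (\<lambda>x. ennreal (- g x)) x = 0" unfolding z .
  have "(\<integral>\<^sup>+ x. 1 * nn_cond_exp M F (\<lambda>x. ennreal (g x)) x \<partial>M) = (\<integral>\<^sup>+ x. 1 * ennreal (g x) \<partial>M)"
    by (rule nn_cond_exp_intg) simp_all
  then have "(\<integral>\<^sup>+ x. nn_cond_exp M F (\<lambda>x. ennreal (g x)) x \<partial>M) = (\<integral>\<^sup>+ x. ennreal (g x) \<partial>M)" by simp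
  also have "\<dots> < \<infinity>" using g by (simp add: integrable_iff_bounded gpos)
  finally have "AE x in M. nn_cond_exp M F (\<lambda>x. ennreal (g x)) x \<noteq> \<infinity>"
    by (intro nn_integral_PInf_AE) simp_all
  then show ?thesis using z2
    by eventually_elim (simp add: real_cond_exp_def less_top)
qed

lemma int2:
  fixes f g :: "'a \<Rightarrow> real"
  assumes fm[measurable]: "f \<in> borel_measurable F" and fpos: "\<And>x. 0 \<le> f x"
    and g: "integrable M g" and gpos: "\<And>x. 0 \<le> g x"
    and i: "integrable M (\<lambda>x. f x * real_cond_exp M F g x)"
  shows "integrable M (\<lambda>x. f x * g x)"
proof (rule integrableI_bounded)
  have fM[measurable]: "f \<in> borel_measurable M" by (rule measurable_from_subalg[OF subalg fm])
  have gm[measurable]: "g \<in> borel_measurable M" using g by simp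
  show "(\<lambda>x. f x * g x) \<in> borel_measurable M" by simp
  have cpos: "AE x in M. 0 \<le> real_cond_exp M F g x"
    by (rule real_cond_exp_pos) (simp_all add: gpos)
  have "(\<integral>\<^sup>+ x. ennreal (norm (f x * g x)) \<partial>M) = (\<integral>\<^sup>+ x. ennreal (f x) * ennreal (g x) \<partial>M)"
    by (rule nn_integral_cong) (simp add: fpos gpos ennreal_mult abs_mult)
  also have "\<dots> = (\<integral>\<^sup>+ x. ennreal (f x) * nn_cond_exp M F (\<lambda>x. ennreal (g x)) x \<partial>M)"
    by (rule nn_cond_exp_intg[symmetric]) simp_all
  also have "\<dots> = (\<integral>\<^sup>+ x. ennreal (norm (f x * real_cond_exp M F g x)) \<partial>M)"
  proof (rule nn_integral_cong_AE)
    show "AE x in M. ennreal (f x) * nn_cond_exp M F (\<lambda>x. ennreal (g x)) x = ennreal (norm (f x * real_cond_exp M F g x))"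
      using nn_real_ce[OF g gpos] cpos
      by eventually_elim (simp add: fpos ennreal_mult abs_mult)
  qed
  also have "\<dots> < \<infinity>" using i by (simp add: integrable_iff_bounded)
  finally show "(\<integral>\<^sup>+ x. ennreal (norm (f x * g x)) \<partial>M) < \<infinity>" .
qed

end

context bn
begin

lemma Kfin:
  assumes D: "D \<in> sets (G (Cn \<union> (On \<union> {A})))"
  shows "AE x in M. real_cond_exp M (G (Wn \<union> {A})) (indicator D) x = real_cond_exp M (G (On \<union> {A})) (indicator D) x"
proof -
  have "finite Cn" using finite_subset[OF Cn_V finV] .
  then show ?thesis using Kind[of Cn] D by blast
qed

lemma TV': "Wn \<union> {A} \<subseteq> V" using Wn_V AV by auto
lemma RV': "On \<union> {A} \<subseteq> V" using On_V AV by auto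
lemma HV': "Cn \<union> (On \<union> {A}) \<subseteq> V" using Cn_V On_V AV by auto
lemma RT': "On \<union> {A} \<subseteq> Wn \<union> {A}" using On_Wn by auto

lemma Kfun:
  fixes f :: "'a \<Rightarrow> real"
  assumes f: "integrable M f" and fm: "f \<in> borel_measurable (G (Cn \<union> (On \<union> {A})))"
  shows "AE x in M. real_cond_exp M (G (Wn \<union> {A})) f x = real_cond_exp M (G (On \<union> {A})) f x"
  by (rule ci_fun[OF sfs[OF TV'] sfs[OF RV'] G_mono[OF RT'] sfs[OF HV'] Kfin f fm])

lemma Ksym:
  fixes g :: "'a \<Rightarrow> real"
  assumes g: "integrable M g" and gm: "g \<in> borel_measurable (G (Wn \<union> {A}))"
  shows "AE x in M. real_cond_exp M (G (Cn \<union> (On \<union> {A}))) g x = real_cond_exp M (G (On \<union> {A})) g x"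
proof (rule ci_fun[OF sfs[OF HV'] sfs[OF RV'] G_mono sfs[OF TV'] _ g gm])
  show "On \<union> {A} \<subseteq> Cn \<union> (On \<union> {A})" by auto
  interpret H: sigma_finite_subalgebra M "G (Cn \<union> (On \<union> {A}))" by (rule sfs[OF HV'])
  interpret R: sigma_finite_subalgebra M "G (On \<union> {A})" by (rule sfs[OF RV'])
  interpret T: sigma_finite_subalgebra M "G (Wn \<union> {A})" by (rule sfs[OF TV'])
  fix D assume D: "D \<in> sets (G (Wn \<union> {A}))"
  have DM[measurable]: "D \<in> sets M" using sets_M[OF D TV'] .
  show "AE x in M. real_cond_exp M (G (Cn \<union> (On \<union> {A}))) (indicator D) x = real_cond_exp M (G (On \<union> {A})) (indicator D) x"
  proof (rule H.real_cond_exp_charact)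
    show "integrable M (indicator D :: _ \<Rightarrow> real)" by simp
    show "integrable M (real_cond_exp M (G (On \<union> {A})) (indicator D))" by (rule R.real_cond_exp_int(1)) simp
    show "real_cond_exp M (G (On \<union> {A})) (indicator D) \<in> borel_measurable (G (Cn \<union> (On \<union> {A})))"
      by (rule meas_lift[of _ "On \<union> {A}"]) auto
    fix B assume B: "B \<in> sets (G (Cn \<union> (On \<union> {A})))"
    have BM[measurable]: "B \<in> sets M" using sets_M[OF B HV'] .
    have "(\<integral>x. indicator D x * indicator B x \<partial>M) = (\<integral>x. indicator D x * real_cond_exp M (G (Wn \<union> {A})) (indicator B) x \<partial>M)"
    proof (rule T.real_cond_exp_intg(2)[symmetric])
      show "integrable M (\<lambda>x. indicator D x * indicator B x :: real)"
        using integrable_mult_indicator[OF DM ind_integrable[OF BM]] by simp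
    qed (use D in auto)
    also have "\<dots> = (\<integral>x. indicator D x * real_cond_exp M (G (On \<union> {A})) (indicator B) x \<partial>M)"
      by (rule integral_cong_AE) (measurable, measurable, use Kfin[OF B] in auto)
    also have "\<dots> = (\<integral>x. real_cond_exp M (G (On \<union> {A})) (indicator D) x * indicator B x \<partial>M)"
      by (rule swap[OF sfs[OF RV'] BM]) simp
    finally show "(\<integral>x\<in>B. indicator D x \<partial>M) = (\<integral>x\<in>B. real_cond_exp M (G (On \<union> {A})) (indicator D) x \<partial>M)"
      unfolding set_lebesgue_integral_def by (simp add: mult.commute)
  qed
qed

end

locale bn2 = bn M N X V E A Y for M :: "'a measure" and N :: "'v \<Rightarrow> 'b measure" and X V E A Y +
  fixes a :: 'b and y :: "'b \<Rightarrow> real"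
  assumes sA: "sets (N A) = Pow (space (N A))" and aA: "a \<in> space (N A)"
    and ym: "y \<in> borel_measurable (N Y)" and yi: "integrable M (\<lambda>\<omega>. y (X Y \<omega>))"
    and posP: "AE \<omega> in M. prop_score M N X A a (pa E A) \<omega> > 0"
    and Ji: "integrable M (Jest M N X E A a Y y)"
begin

abbreviation "Ia \<equiv> Ind X A a"
abbreviation "phi \<equiv> (\<lambda>x. y (X Y x))"
abbreviation "piP \<equiv> prop_score M N X A a Pa"
abbreviation "piO \<equiv> prop_score M N X A a On"

lemma Ind_ind: "Ind X A a = indicator {x. X A x = a}"
  by (rule ext) (simp add: Ind_def indicator_def)

lemma Ia_meas:
  assumes "A \<in> S" "S \<subseteq> V"
  shows "Ia \<in> borel_measurable (G S)"
proof -
  have XA: "X A \<in> measurable (G S) (N A)" using X_meas_G assms by auto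
  have "{a} \<in> sets (N A)" using sA aA by auto
  then have "X A -` {a} \<inter> space (G S) \<in> sets (G S)" using measurable_sets[OF XA] by blast
  moreover have "{x. X A x = a} \<inter> space (G S) = X A -` {a} \<inter> space (G S)" by auto
  ultimately show ?thesis unfolding Ind_ind by (simp add: borel_measurable_indicator_iff)
qed

lemma Ia_M[measurable]: "Ia \<in> borel_measurable M"
  using meas_M[OF Ia_meas[of "{A}"]] AV by auto

lemma Ia_01: "0 \<le> Ia x" "Ia x \<le> 1" "Ia x * Ia x = Ia x"
  by (auto simp: Ind_def)

lemma Ia_int: "integrable M Ia"
proof (rule Bochner_Integration.integrable_bound[of M "\<lambda>_. 1::real"])
  show "integrable M (\<lambda>_. 1::real)" by simp
  show "Ia \<in> borel_measurable M" by simp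
  show "AE x in M. norm (Ia x) \<le> norm (1::real)" by (simp add: Ind_def)
qed

lemma Y_Cn: "Y \<in> Cn"
proof -
  have "A \<in> an V E Y" using irr AV unfolding irrel_def by auto
  then have "(A, Y) \<in> E\<^sup>*" unfolding an_def by auto
  then show ?thesis unfolding cn_def using YV AY by auto
qed

lemma phi_meas: "Y \<in> S \<Longrightarrow> S \<subseteq> V \<Longrightarrow> phi \<in> borel_measurable (G S)"
  by (rule measurable_compose[OF X_meas_G ym]) auto

lemma phi_M[measurable]: "phi \<in> borel_measurable M"
  using yi by simp

lemma piP_meas: "piP \<in> borel_measurable (G Pa)"
  unfolding prop_score_def by simp

lemma piO_meas: "piO \<in> borel_measurable (G On)"
  unfolding prop_score_def by simp

lemma piP_M[measurable]: "piP \<in> borel_measurable M" unfolding prop_score_def by simp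
lemma piO_M[measurable]: "piO \<in> borel_measurable M" unfolding prop_score_def by simp

lemma piP_W: "piP \<in> borel_measurable (G Wn)"
  by (rule meas_lift[OF piP_meas Pa_Wn])

lemma F1: "AE x in M. real_cond_exp M (G Wn) Ia x = piP x"
proof -
  define D where "D = X A -` {a} \<inter> space M"
  have D: "D \<in> sets (G {A})" unfolding D_def sets_G_single[OF AV] using sA aA by auto
  have l: "AE x in M. real_cond_exp M (G (V - de V E A)) (indicator D) x = real_cond_exp M (G (pa E A)) (indicator D) x"
    by (rule lm2[OF AV D])
  have DM: "D \<in> sets M" using sets_M[OF D] AV by auto
  have ae: "AE x in M. Ia x = indicator D x"
    by (rule AE_I2) (simp add: Ind_def D_def indicator_def)
  interpret Ww: sigma_finite_subalgebra M "G Wn" by (rule sfs[OF Wn_V])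
  interpret Pp: sigma_finite_subalgebra M "G Pa" by (rule sfs[OF pa_V])
  have c1: "AE x in M. real_cond_exp M (G Wn) Ia x = real_cond_exp M (G Wn) (indicator D) x"
    by (rule Ww.real_cond_exp_cong[OF ae]) (use DM in simp_all)
  have c2: "AE x in M. real_cond_exp M (G Pa) Ia x = real_cond_exp M (G Pa) (indicator D) x"
    by (rule Pp.real_cond_exp_cong[OF ae]) (use DM in simp_all)
  show ?thesis using l c1 c2 unfolding nondesc_def prop_score_def by eventually_elim simp
qed

lemma piP_int: "integrable M piP"
proof -
  interpret P: sigma_finite_subalgebra M "G Pa" by (rule sfs[OF pa_V])
  show ?thesis unfolding prop_score_def by (rule P.real_cond_exp_int(1)[OF Ia_int])
qed

lemma piO_pos: "AE x in M. piO x > 0"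
proof -
  interpret Oo: sigma_finite_subalgebra M "G On" by (rule sfs[OF On_V])
  have n: "AE x in M. real_cond_exp M (G On) (real_cond_exp M (G Wn) Ia) x = real_cond_exp M (G On) Ia x"
    by (rule Oo.real_cond_exp_nested_subalg[OF subalg[OF Wn_V] subalg2[OF On_Wn] Ia_int])
  have c: "AE x in M. real_cond_exp M (G On) (real_cond_exp M (G Wn) Ia) x = real_cond_exp M (G On) piP x"
    by (rule Oo.real_cond_exp_cong[OF F1]) simp_all
  have g: "AE x in M. real_cond_exp M (G On) piP x > 0"
    by (rule Oo.real_cond_exp_gr_c[OF piP_int posP])
  show ?thesis using n c g unfolding prop_score_def by eventually_elim simp
qed

lemma Ia_piP_int: "integrable M (\<lambda>x. Ia x / piP x)"
proof -
  interpret Ww: sigma_finite_subalgebra M "G Wn" by (rule sfs[OF Wn_V])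
  define fP where "fP = (\<lambda>x. if piP x > 0 then 1 / piP x else 0)"
  have fPm: "fP \<in> borel_measurable (G Wn)" unfolding fP_def using piP_W by simp
  have fPpos: "0 \<le> fP x" for x unfolding fP_def by simp
  have "integrable M (\<lambda>x. fP x * real_cond_exp M (G Wn) Ia x) = integrable M (\<lambda>x. 1::real)"
  proof (rule integrable_cong_AE)
    show "(\<lambda>x. fP x * real_cond_exp M (G Wn) Ia x) \<in> borel_measurable M"
      using meas_M[OF fPm Wn_V] by simp
    show "AE x in M. fP x * real_cond_exp M (G Wn) Ia x = 1"
      using F1 posP by eventually_elim (simp add: fP_def)
  qed simp
  then have "integrable M (\<lambda>x. fP x * Ia x)"
    by (intro Ww.int2[OF fPm fPpos Ia_int]) (simp_all add: Ia_01)
  moreover have "integrable M (\<lambda>x. fP x * Ia x) = integrable M (\<lambda>x. Ia x / piP x)"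
  proof (rule integrable_cong_AE)
    show "(\<lambda>x. fP x * Ia x) \<in> borel_measurable M" using meas_M[OF fPm Wn_V] by simp
    show "AE x in M. fP x * Ia x = Ia x / piP x"
      using posP by eventually_elim (simp add: fP_def)
  qed simp
  ultimately show ?thesis by simp
qed

end

context bn2
begin

lemma R3:
  fixes g :: "'a \<Rightarrow> real"
  assumes gm[measurable]: "g \<in> borel_measurable M" and ki: "integrable M (\<lambda>x. Ia x * g x)"
  shows "AE x in M. real_cond_exp M (G (On \<union> {A})) (\<lambda>x. Ia x * g x) x
     = Ia x * (real_cond_exp M (G On) (\<lambda>x. Ia x * g x) x / piO x)"
proof -
  define k where "k = (\<lambda>x. Ia x * g x)"
  define ek where "ek = real_cond_exp M (G On) k"
  define ka where "ka = (\<lambda>x. ek x / piO x)"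
  interpret Oo: sigma_finite_subalgebra M "G On" by (rule sfs[OF On_V])
  interpret Rr: sigma_finite_subalgebra M "G (On \<union> {A})" by (rule sfs[OF RV'])
  have kint: "integrable M k" unfolding k_def by (rule ki)
  have km[measurable]: "k \<in> borel_measurable M" using kint by simp
  have ekm: "ek \<in> borel_measurable (G On)" unfolding ek_def by simp
  have ekM[measurable]: "ek \<in> borel_measurable M" unfolding ek_def by simp
  have ekint: "integrable M ek" unfolding ek_def by (rule Oo.real_cond_exp_int(1)[OF kint])
  have kam: "ka \<in> borel_measurable (G On)" unfolding ka_def using ekm piO_meas by simp
  have kaM[measurable]: "ka \<in> borel_measurable M" unfolding ka_def by simp
  have ae1: "AE x in M. \<bar>ka x\<bar> * piO x = \<bar>ek x\<bar>"
    using piO_pos by eventually_elim (simp add: ka_def abs_div)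
  have absm: "(\<lambda>x. \<bar>ka x\<bar>) \<in> borel_measurable (G On)" using kam by simp
  have iabs0: "integrable M (\<lambda>x. \<bar>ka x\<bar> * real_cond_exp M (G On) Ia x)"
  proof -
    have "integrable M (\<lambda>x. \<bar>ka x\<bar> * piO x) = integrable M (\<lambda>x. \<bar>ek x\<bar>)"
      by (rule integrable_cong_AE) (simp, simp, rule ae1)
    then show ?thesis using ekint unfolding prop_score_def by simp
  qed
  have iabs: "integrable M (\<lambda>x. \<bar>ka x\<bar> * Ia x)"
    by (rule Oo.int2[OF absm abs_ge_zero Ia_int Ia_01(1) iabs0])
  have ika: "integrable M (\<lambda>x. Ia x * ka x)"
  proof (rule Bochner_Integration.integrable_bound[OF iabs])
    show "(\<lambda>x. Ia x * ka x) \<in> borel_measurable M" by simp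
    show "AE x in M. norm (Ia x * ka x) \<le> norm (\<bar>ka x\<bar> * Ia x)"
      by (simp add: abs_mult Ia_01 mult.commute)
  qed
  have main: "AE x in M. real_cond_exp M (G (On \<union> {A})) k x = Ia x * ka x"
  proof (rule Rr.real_cond_exp_charact)
    show "integrable M k" by (rule kint)
    show "integrable M (\<lambda>x. Ia x * ka x)" by (rule ika)
    have "Ia \<in> borel_measurable (G (On \<union> {A}))" by (rule Ia_meas) (use RV' in auto)
    moreover have "ka \<in> borel_measurable (G (On \<union> {A}))" by (rule meas_lift[OF kam]) auto
    ultimately show "(\<lambda>x. Ia x * ka x) \<in> borel_measurable (G (On \<union> {A}))" by simp
    fix D assume D: "D \<in> sets (G (On \<union> {A}))"
    have "(\<integral>x. indicator D x * k x \<partial>M) = (\<integral>x. indicator D x * (Ia x * ka x) \<partial>M)"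
    proof (rule ext_gen[OF subalg[OF RV'] prodsets_Int_stable prodsets_Pow sets_G_Un space_prodsets kint ika _ D])
      fix D' assume "D' \<in> prodsets On {A}"
      then obtain B C where D': "D' = B \<inter> C" and B: "B \<in> sets (G On)" and C: "C \<in> sets (G {A})"
        unfolding prodsets_def by auto
      obtain S where S: "S \<in> sets (N A)" and CS: "C = X A -` S \<inter> space M"
        using C unfolding sets_G_single[OF AV] by auto
      have BM[measurable]: "B \<in> sets M" using sets_M[OF B On_V] .
      have Bsp: "B \<subseteq> space M" using sets.sets_into_space[OF BM] .
      have pw: "indicator (B \<inter> C) x * Ia x = (if a \<in> S then 1 else 0) * (indicator B x * Ia x)" for x
      proof (cases "x \<in> B")
        case False then show ?thesis by simp
      next
        case True
        then have xs: "x \<in> space M" using Bsp by auto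
        show ?thesis
        proof (cases "X A x = a")
          case True2: True
          then show ?thesis using True xs unfolding CS by (simp add: Ind_def)
        next
          case False
          then show ?thesis by (simp add: Ind_def)
        qed
      qed
      have eq1: "(\<integral>x. indicator D' x * k x \<partial>M) = (if a \<in> S then 1 else 0) * (\<integral>x. indicator B x * k x \<partial>M)"
      proof -
        have "(\<lambda>x. indicator D' x * k x) = (\<lambda>x. (if a \<in> S then 1 else 0) * (indicator B x * k x))"
          unfolding D' k_def by (rule ext) (simp only: mult.assoc[symmetric] pw)
        then show ?thesis by simp
      qed
      have eq2: "(\<integral>x. indicator D' x * (Ia x * ka x) \<partial>M) = (if a \<in> S then 1 else 0) * (\<integral>x. indicator B x * (Ia x * ka x) \<partial>M)"
      proof -
        have "(\<lambda>x. indicator D' x * (Ia x * ka x)) = (\<lambda>x. (if a \<in> S then 1 else 0) * (indicator B x * (Ia x * ka x)))"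
          unfolding D' by (rule ext) (simp only: mult.assoc[symmetric] pw)
        then show ?thesis by simp
      qed
      have l1: "(\<integral>x. indicator B x * k x \<partial>M) = (\<integral>x. indicator B x * ek x \<partial>M)"
        unfolding ek_def
      proof (rule Oo.real_cond_exp_intg(2)[symmetric])
        show "integrable M (\<lambda>x. indicator B x * k x)" using integrable_mult_indicator[OF BM kint] by simp
      qed (use B in auto)
      have l2: "(\<integral>x. indicator B x * (Ia x * ka x) \<partial>M) = (\<integral>x. (indicator B x * ka x) * real_cond_exp M (G On) Ia x \<partial>M)"
      proof -
        have "(\<integral>x. indicator B x * (Ia x * ka x) \<partial>M) = (\<integral>x. (indicator B x * ka x) * Ia x \<partial>M)"
          by (simp add: mult_ac)
        also have "\<dots> = (\<integral>x. (indicator B x * ka x) * real_cond_exp M (G On) Ia x \<partial>M)"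
        proof (rule Oo.real_cond_exp_intg(2)[symmetric])
          show "integrable M (\<lambda>x. indicator B x * ka x * Ia x)"
            using integrable_mult_indicator[OF BM ika] by (simp add: mult_ac)
          show "(\<lambda>x. indicator B x * ka x) \<in> borel_measurable (G On)" using B kam by simp
        qed simp
        finally show ?thesis .
      qed
      have l3: "(\<integral>x. (indicator B x * ka x) * real_cond_exp M (G On) Ia x \<partial>M) = (\<integral>x. indicator B x * ek x \<partial>M)"
      proof (rule integral_cong_AE)
        show "AE x in M. indicator B x * ka x * real_cond_exp M (G On) Ia x = indicator B x * ek x"
          using piO_pos by eventually_elim (simp add: ka_def prop_score_def)
      qed simp_all
      show "(\<integral>x. indicator D' x * k x \<partial>M) = (\<integral>x. indicator D' x * (Ia x * ka x) \<partial>M)"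
        unfolding eq1 eq2 l1 l2 l3 ..
    qed
    then show "(\<integral>x\<in>D. k x \<partial>M) = (\<integral>x\<in>D. Ia x * ka x \<partial>M)"
      unfolding set_lebesgue_integral_def by simp
  qed
  then show ?thesis unfolding k_def ka_def ek_def .
qed

end

context bn2
begin

abbreviation "Jf \<equiv> Jest M N X E A a Y y"
abbreviation "Tf \<equiv> Test M N X V E A a Y y"
abbreviation "beta \<equiv> breg M N X A a Y y On"

lemma Jf_eq: "Jf = (\<lambda>x. (Ia x / piP x) * phi x)"
  by (rule ext) (simp add: Jest_def)

lemma Jf_M[measurable]: "Jf \<in> borel_measurable M" using Ji by simp

lemma beta_meas: "beta \<in> borel_measurable (G On)"
  unfolding breg_def prop_score_def by simp

lemma beta_M[measurable]: "beta \<in> borel_measurable M"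
  unfolding breg_def prop_score_def by simp

lemma q_meas: "(\<lambda>x. Ia x / piP x) \<in> borel_measurable (G (Wn \<union> {A}))"
proof -
  have "Ia \<in> borel_measurable (G (Wn \<union> {A}))" by (rule Ia_meas) (use TV' in auto)
  moreover have "piP \<in> borel_measurable (G (Wn \<union> {A}))" by (rule meas_lift[OF piP_W]) auto
  ultimately show ?thesis by simp
qed

lemma phi_int_Ia: "integrable M (\<lambda>x. Ia x * phi x)"
proof (rule Bochner_Integration.integrable_bound[OF yi])
  show "(\<lambda>x. Ia x * phi x) \<in> borel_measurable M" by simp
  show "AE x in M. norm (Ia x * phi x) \<le> norm (phi x)"
    by (simp add: Ind_def)
qed

lemma mainW: "AE x in M. real_cond_exp M (G Wn) Jf x = beta x"
proof -
  interpret Tt: sigma_finite_subalgebra M "G (Wn \<union> {A})" by (rule sfs[OF TV'])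
  interpret Rr: sigma_finite_subalgebra M "G (On \<union> {A})" by (rule sfs[OF RV'])
  interpret Ww: sigma_finite_subalgebra M "G Wn" by (rule sfs[OF Wn_V])
  have phiH: "phi \<in> borel_measurable (G (Cn \<union> (On \<union> {A})))" by (rule phi_meas) (use Y_Cn HV' in auto)
  have s1: "AE x in M. real_cond_exp M (G (Wn \<union> {A})) Jf x = (Ia x / piP x) * real_cond_exp M (G (Wn \<union> {A})) phi x"
    unfolding Jf_eq
    by (rule Tt.real_cond_exp_mult[OF q_meas phi_M]) (use Ji Jf_eq in simp)
  have s2: "AE x in M. real_cond_exp M (G (Wn \<union> {A})) phi x = real_cond_exp M (G (On \<union> {A})) phi x"
    by (rule Kfun[OF yi phiH])
  have s3: "AE x in M. real_cond_exp M (G (On \<union> {A})) (\<lambda>x. Ia x * phi x) x = Ia x * real_cond_exp M (G (On \<union> {A})) phi x"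
  proof (rule Rr.real_cond_exp_mult[OF _ phi_M phi_int_Ia])
    show "Ia \<in> borel_measurable (G (On \<union> {A}))" by (rule Ia_meas) (use RV' in auto)
  qed
  have s4: "AE x in M. real_cond_exp M (G (On \<union> {A})) (\<lambda>x. Ia x * phi x) x
       = Ia x * (real_cond_exp M (G On) (\<lambda>x. Ia x * phi x) x / piO x)"
    by (rule R3[OF phi_M phi_int_Ia])
  have s5: "AE x in M. real_cond_exp M (G (Wn \<union> {A})) Jf x = (beta x / piP x) * Ia x"
    using s1 s2 s3 s4 by eventually_elim (simp add: breg_def)
  have i5: "integrable M (\<lambda>x. (beta x / piP x) * Ia x)"
  proof -
    have "integrable M (real_cond_exp M (G (Wn \<union> {A})) Jf)" by (rule Tt.real_cond_exp_int(1)[OF Ji])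
    moreover have "integrable M (real_cond_exp M (G (Wn \<union> {A})) Jf) = integrable M (\<lambda>x. (beta x / piP x) * Ia x)"
      by (rule integrable_cong_AE) (simp, simp, rule s5)
    ultimately show ?thesis by simp
  qed
  have s6: "AE x in M. real_cond_exp M (G Wn) (real_cond_exp M (G (Wn \<union> {A})) Jf) x = real_cond_exp M (G Wn) Jf x"
    by (rule Ww.real_cond_exp_nested_subalg[OF subalg[OF TV'] subalg2 Ji]) auto
  have s7: "AE x in M. real_cond_exp M (G Wn) (real_cond_exp M (G (Wn \<union> {A})) Jf) x
      = real_cond_exp M (G Wn) (\<lambda>x. (beta x / piP x) * Ia x) x"
    by (rule Ww.real_cond_exp_cong[OF s5]) simp_all
  have bW: "(\<lambda>x. beta x / piP x) \<in> borel_measurable (G Wn)"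
  proof -
    have "beta \<in> borel_measurable (G Wn)" by (rule meas_lift[OF beta_meas On_Wn])
    then show ?thesis using piP_W by simp
  qed
  have s8: "AE x in M. real_cond_exp M (G Wn) (\<lambda>x. (beta x / piP x) * Ia x) x = (beta x / piP x) * real_cond_exp M (G Wn) Ia x"
    by (rule Ww.real_cond_exp_mult[OF bW Ia_M i5])
  show ?thesis using s6 s7 s8 F1 posP by eventually_elim simp
qed

lemma pa_Wn: "w \<in> Wn \<Longrightarrow> {w} \<union> pa E w \<subseteq> Wn"
proof -
  assume w: "w \<in> Wn"
  have "p \<in> Wn" if p: "p \<in> pa E w" for p
  proof -
    have pV: "p \<in> V" using p pa_V by auto
    have "(A, p) \<notin> E\<^sup>*"
    proof
      assume "(A, p) \<in> E\<^sup>*"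
      moreover have "(p, w) \<in> E" using p unfolding pa_def by auto
      ultimately have "(A, w) \<in> E\<^sup>*" by (rule rtrancl_into_rtrancl)
      then show False using w unfolding nondesc_def de_def by auto
    qed
    then show ?thesis using pV unfolding nondesc_def de_def by auto
  qed
  then show ?thesis using w by auto
qed

theorem part1:
  assumes w: "w \<in> Wn"
  shows "AE x in M. real_cond_exp M (G ({w} \<union> pa E w)) Jf x = real_cond_exp M (G ({w} \<union> pa E w)) beta x"
proof -
  have sw: "{w} \<union> pa E w \<subseteq> Wn" by (rule pa_Wn[OF w])
  interpret Gw: sigma_finite_subalgebra M "G ({w} \<union> pa E w)" by (rule sfs) (use sw Wn_V in auto)
  have n: "AE x in M. real_cond_exp M (G ({w} \<union> pa E w)) (real_cond_exp M (G Wn) Jf) x = real_cond_exp M (G ({w} \<union> pa E w)) Jf x"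
    by (rule Gw.real_cond_exp_nested_subalg[OF subalg[OF Wn_V] subalg2[OF sw] Ji])
  have c: "AE x in M. real_cond_exp M (G ({w} \<union> pa E w)) (real_cond_exp M (G Wn) Jf) x = real_cond_exp M (G ({w} \<union> pa E w)) beta x"
    by (rule Gw.real_cond_exp_cong[OF mainW]) simp_all
  show ?thesis using n c by auto
qed

lemma mainH: "AE x in M. real_cond_exp M (G (Cn \<union> (On \<union> {A}))) Jf x = Tf x"
proof -
  interpret Hh: sigma_finite_subalgebra M "G (Cn \<union> (On \<union> {A}))" by (rule sfs[OF HV'])
  interpret Ww: sigma_finite_subalgebra M "G Wn" by (rule sfs[OF Wn_V])
  interpret Oo: sigma_finite_subalgebra M "G On" by (rule sfs[OF On_V])
  define q where "q = (\<lambda>x. Ia x / piP x)"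
  have qi: "integrable M q" unfolding q_def by (rule Ia_piP_int)
  have qM[measurable]: "q \<in> borel_measurable M" using qi by simp
  have phiH: "phi \<in> borel_measurable (G (Cn \<union> (On \<union> {A})))" by (rule phi_meas) (use Y_Cn HV' in auto)
  have t1: "AE x in M. real_cond_exp M (G (Cn \<union> (On \<union> {A}))) Jf x = phi x * real_cond_exp M (G (Cn \<union> (On \<union> {A}))) q x"
  proof -
    have "Jf = (\<lambda>x. phi x * q x)" unfolding Jf_eq q_def by (rule ext) (simp add: mult.commute)
    moreover have "AE x in M. real_cond_exp M (G (Cn \<union> (On \<union> {A}))) (\<lambda>x. phi x * q x) x = phi x * real_cond_exp M (G (Cn \<union> (On \<union> {A}))) q x"
      by (rule Hh.real_cond_exp_mult[OF phiH qM]) (use Ji \<open>Jf = (\<lambda>x. phi x * q x)\<close> in simp)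
    ultimately show ?thesis by simp
  qed
  have t2: "AE x in M. real_cond_exp M (G (Cn \<union> (On \<union> {A}))) q x = real_cond_exp M (G (On \<union> {A})) q x"
    by (rule Ksym[OF qi]) (use q_meas in \<open>simp add: q_def\<close>)
  have qeq: "q = (\<lambda>x. Ia x * (1 / piP x))" unfolding q_def by (rule ext) simp
  have t3: "AE x in M. real_cond_exp M (G (On \<union> {A})) q x = Ia x * (real_cond_exp M (G On) q x / piO x)"
    unfolding qeq by (rule R3) (use qi qeq in simp_all)
  have pW: "(\<lambda>x. 1 / piP x) \<in> borel_measurable (G Wn)" using piP_W by simp
  have w1: "AE x in M. real_cond_exp M (G Wn) q x = 1"
  proof -
    have qe: "q = (\<lambda>x. (1 / piP x) * Ia x)" unfolding q_def by (rule ext) simp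
    have m: "AE x in M. real_cond_exp M (G Wn) (\<lambda>x. (1 / piP x) * Ia x) x = (1 / piP x) * real_cond_exp M (G Wn) Ia x"
      by (rule Ww.real_cond_exp_mult[OF pW Ia_M]) (use qi qe in simp)
    show ?thesis using m[folded qe] F1 posP by eventually_elim simp
  qed
  have o1: "AE x in M. real_cond_exp M (G On) (real_cond_exp M (G Wn) q) x = real_cond_exp M (G On) q x"
    by (rule Oo.real_cond_exp_nested_subalg[OF subalg[OF Wn_V] subalg2[OF On_Wn] qi])
  have o2: "AE x in M. real_cond_exp M (G On) (real_cond_exp M (G Wn) q) x = real_cond_exp M (G On) (\<lambda>x. 1) x"
    by (rule Oo.real_cond_exp_cong[OF w1]) simp_all
  have o3: "AE x in M. real_cond_exp M (G On) (\<lambda>x. 1) x = (1::real)"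
    by (rule Oo.real_cond_exp_F_meas) simp_all
  show ?thesis using t1 t2 t3 o1 o2 o3
    by eventually_elim (simp add: Test_def)
qed

theorem part2:
  assumes m: "m \<in> Cn"
  shows "AE x in M. real_cond_exp M (G ({m} \<union> pa E m)) Jf x = real_cond_exp M (G ({m} \<union> pa E m)) Tf x"
proof -
  have sm: "{m} \<union> pa E m \<subseteq> Cn \<union> (On \<union> {A})" using pa_Cn[OF m] m by auto
  interpret Gm: sigma_finite_subalgebra M "G ({m} \<union> pa E m)" by (rule sfs) (use sm HV' in auto)
  have n: "AE x in M. real_cond_exp M (G ({m} \<union> pa E m)) (real_cond_exp M (G (Cn \<union> (On \<union> {A}))) Jf) x = real_cond_exp M (G ({m} \<union> pa E m)) Jf x"
    by (rule Gm.real_cond_exp_nested_subalg[OF subalg[OF HV'] subalg2[OF sm] Ji])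
  have c: "AE x in M. real_cond_exp M (G ({m} \<union> pa E m)) (real_cond_exp M (G (Cn \<union> (On \<union> {A}))) Jf) x = real_cond_exp M (G ({m} \<union> pa E m)) Tf x"
    by (rule Gm.real_cond_exp_cong[OF mainH]) (simp, simp add: Test_def)
  show ?thesis using n c by auto
qed

end

theorem lemma6:
  fixes M :: "'a measure" and N :: "'v \<Rightarrow> 'b measure" and X :: "'v \<Rightarrow> 'a \<Rightarrow> 'b"
    and V :: "'v set" and E :: "('v \<times> 'v) set" and A Y :: 'v and a :: 'b and y :: "'b \<Rightarrow> real"
  assumes "prob_space M"
    and "is_DAG V E"
    and "\<And>v. v \<in> V \<Longrightarrow> X v \<in> measurable M (N v)"
    and "local_markov M N X V E"
    and "A \<in> V" and "Y \<in> V" and "A \<noteq> Y"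
    and "countable (space (N A))" and "sets (N A) = Pow (space (N A))" and "a \<in> space (N A)"
    and "y \<in> borel_measurable (N Y)"
    and "integrable M (\<lambda>\<omega>. y (X Y \<omega>))"
    and "AE \<omega> in M. prop_score M N X A a (pa E A) \<omega> > 0"
    and "integrable M (Jest M N X E A a Y y)"
    and "integrable M (Test M N X V E A a Y y)"
    and "irrel V E A Y = {}"
  shows "(\<forall>w \<in> nondesc V E A.
            AE \<omega> in M. real_cond_exp M (gen M N X ({w} \<union> pa E w)) (Jest M N X E A a Y y) \<omega>
                       = real_cond_exp M (gen M N X ({w} \<union> pa E w)) (breg M N X A a Y y (Oset V E A Y)) \<omega>)
       \<and> (\<forall>m \<in> mediators V E A Y.
            AE \<omega> in M. real_cond_exp M (gen M N X ({m} \<union> pa E m)) (Jest M N X E A a Y y) \<omega>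
                       = real_cond_exp M (gen M N X ({m} \<union> pa E m)) (Test M N X V E A a Y y) \<omega>)
       \<and> (AE \<omega> in M. real_cond_exp M (gen M N X ({Y} \<union> pa E Y)) (Jest M N X E A a Y y) \<omega>
                       = real_cond_exp M (gen M N X ({Y} \<union> pa E Y)) (Test M N X V E A a Y y) \<omega>)"
proof -
  have g: "gsetup M N X V" unfolding gsetup_def gsetup_axioms_def using assms(1,3) by blast
  have b: "bn M N X V E A Y" unfolding bn_def bn_axioms_def using g assms(2,4,5,6,7,16) by blast
  have b2: "bn2 M N X V E A Y a y" unfolding bn2_def bn2_axioms_def using b assms(9-14) by blast
  interpret bn2 M N X V E A Y a y by (rule b2)
  have med: "mediators V E A Y \<subseteq> Cn" unfolding mediators_def by auto
  show ?thesis
  proof (intro conjI ballI)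
    fix w assume "w \<in> nondesc V E A"
    then show "AE \<omega> in M. real_cond_exp M (gen M N X ({w} \<union> pa E w)) (Jest M N X E A a Y y) \<omega>
                       = real_cond_exp M (gen M N X ({w} \<union> pa E w)) (breg M N X A a Y y (Oset V E A Y)) \<omega>"
      by (rule part1)
  next
    fix m assume "m \<in> mediators V E A Y"
    then have "m \<in> Cn" using med by auto
    then show "AE \<omega> in M. real_cond_exp M (gen M N X ({m} \<union> pa E m)) (Jest M N X E A a Y y) \<omega>
                       = real_cond_exp M (gen M N X ({m} \<union> pa E m)) (Test M N X V E A a Y y) \<omega>"
      by (rule part2)
  next
    show "AE \<omega> in M. real_cond_exp M (gen M N X ({Y} \<union> pa E Y)) (Jest M N X E A a Y y) \<omega>
                       = real_cond_exp M (gen M N X ({Y} \<union> pa E Y)) (Test M N X V E A a Y y) \<omega>"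
      by (rule part2[OF Y_Cn])
  qed
qed

end
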